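(* Almost surely, the functional $E(h)=D(h)-W(h)$ admits a unique minimizer among all configurations $h$.
   Context: Let $L\ge2$ be an integer. A configuration is a function $h:\{0,1,\dots,L\}\to\mathbb R$ with $h(0)=h(L)=0$. $D(h)=\frac12\sum_{x=1}^L(h(x)-h(x-1))^2$; $\{W(x,\cdot)\}_{x=1}^{L-1}$ are independent two-sided standard Brownian motions on $\mathbb R$ (with $W(x,0)=0$), and $W(h)=\sum_{x=1}^{L-1}W(x,h(x))$. *)

theory Defs
  imports "HOL-Probability.Probability"
begin

definition two_sided_BM :: "'a measure \<Rightarrow> (real \<Rightarrow> 'a \<Rightarrow> real) \<Rightarrow> bool" where
  "two_sided_BM M B \<longleftrightarrow>
     (\<forall>t. B t \<in> borel_measurable M) \<and>
     (\<forall>\<omega>\<in>space M. B 0 \<omega> = 0) \<and>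
     (\<forall>\<omega>\<in>space M. continuous_on UNIV (\<lambda>t. B t \<omega>)) \<and>
     (\<forall>ts::real list. sorted_wrt (<) ts \<longrightarrow>
        prob_space.indep_vars M (\<lambda>_. borel)
          (\<lambda>i \<omega>. B (ts ! Suc i) \<omega> - B (ts ! i) \<omega>) {..<length ts - 1} \<and>
        (\<forall>i < length ts - 1.
           distributed M lborel (\<lambda>\<omega>. B (ts ! Suc i) \<omega> - B (ts ! i) \<omega>)
             (normal_density 0 (sqrt (ts ! Suc i - ts ! i)))))"

text \<open>Configurations h : {0..L} \<rightarrow> R with h(0) = h(L) = 0, represented
  as functions on nat that vanish outside {0..L} (so that equality of
  configurations is equality of functions).\<close>
definition configs :: "nat \<Rightarrow> (nat \<Rightarrow> real) set" where
  "configs L = {h. h 0 = 0 \<and> h L = 0 \<and> (\<forall>x>L. h x = 0)}"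

definition Dir :: "nat \<Rightarrow> (nat \<Rightarrow> real) \<Rightarrow> real" where
  "Dir L h = (1/2) * (\<Sum>x=1..L. (h x - h (x - 1))\<^sup>2)"

definition Wpot :: "nat \<Rightarrow> (nat \<Rightarrow> real \<Rightarrow> 'a \<Rightarrow> real) \<Rightarrow> 'a \<Rightarrow> (nat \<Rightarrow> real) \<Rightarrow> real" where
  "Wpot L W \<omega> h = (\<Sum>x=1..L-1. W x (h x) \<omega>)"

definition energy :: "nat \<Rightarrow> (nat \<Rightarrow> real \<Rightarrow> 'a \<Rightarrow> real) \<Rightarrow> 'a \<Rightarrow> (nat \<Rightarrow> real) \<Rightarrow> real" where
  "energy L W \<omega> h = Dir L h - Wpot L W \<omega> h"

end

theory Submission
  imports Defs
begin


lemma sq_le_card: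
  fixes h :: "nat \<Rightarrow> real"
  assumes "h 0 = 0" "y \<le> L"
  shows "(h y)\<^sup>2 \<le> real L * (\<Sum>i=1..L. (h i - h (i-1))\<^sup>2)"
proof -
  have tel: "h y = (\<Sum>i\<in>{1..y}. h i - h (i-1))"
  proof -
    have "(\<Sum>i\<in>{1..y}. h i - h (i-1)) = (\<Sum>i\<in>{0..<y}. h (Suc i) - h i)"
      by (rule sum.reindex_bij_witness[of _ Suc "\<lambda>i. i - 1"]) auto
    also have "\<dots> = h y - h 0" by (rule sum_Suc_diff') simp_all
    finally show ?thesis using assms by simp
  qed
  have "(h y)\<^sup>2 \<le> (\<Sum>i\<in>{1..y}. (h i - h (i-1))\<^sup>2) * card {1..y}"
    unfolding tel by (rule sum_squared_le_sum_of_squares)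
  also have "\<dots> \<le> (\<Sum>i=1..L. (h i - h (i-1))\<^sup>2) * real L"
    apply (rule mult_mono)
    using assms by (auto intro!: sum_mono2 sum_nonneg)
  finally show ?thesis by (simp add: mult.commute)
qed

lemma energy_cont:
  assumes cont: "\<And>y. y \<in> {1..L-1} \<Longrightarrow> continuous_on UNIV (\<lambda>t. W y t \<omega>)"
  shows "continuous_on UNIV (energy L W \<omega>)"
proof -
  have c1: "continuous_on UNIV (\<lambda>h::nat\<Rightarrow>real. W y (h y) \<omega>)" if "y \<in> {1..L-1}" for y
    by (rule continuous_on_compose2[OF cont[OF that]]) (auto intro: continuous_on_product_coordinates)
  have "continuous_on UNIV (\<lambda>h::nat\<Rightarrow>real. Dir L h - Wpot L W \<omega> h)"
    unfolding Dir_def Wpot_def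
    by (intro continuous_intros continuous_on_sum c1) (auto intro: continuous_on_product_coordinates)
  then show ?thesis unfolding energy_def[abs_def] .
qed

lemma energy_zero:
  assumes "\<And>y. y \<in> {1..L-1} \<Longrightarrow> W y 0 \<omega> = 0"
  shows "energy L W \<omega> (\<lambda>_. 0) = 0"
  using assms by (simp add: energy_def Dir_def Wpot_def)

lemma energy_coercive:
  fixes B :: real
  assumes L: "L \<ge> 2" and g: "g \<in> configs L"
    and grow: "\<And>y t. y \<in> {1..L-1} \<Longrightarrow> W y t \<omega> \<le> t\<^sup>2 / (4 * (real L)\<^sup>2) + B"
    and y: "y \<le> L"
  shows "(g y)\<^sup>2 / (4 * real L) - real (L - 1) * B \<le> energy L W \<omega> g"
proof -
  define S where "S = (\<Sum>i=1..L. (g i - g (i-1))\<^sup>2)"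
  have g0: "g 0 = 0" using g by (simp add: configs_def)
  have sq: "(g z)\<^sup>2 \<le> real L * S" if "z \<le> L" for z
    unfolding S_def by (rule sq_le_card[where h=g, OF g0 that])
  have S0: "0 \<le> S" unfolding S_def by (intro sum_nonneg) simp
  have Lpos: "(0::real) < real L" using L by simp
  have "Wpot L W \<omega> g \<le> (\<Sum>y=1..L-1. (g y)\<^sup>2 / (4 * (real L)\<^sup>2) + B)"
    unfolding Wpot_def by (intro sum_mono grow) simp
  also have "\<dots> \<le> (\<Sum>y=1..L-1. real L * S / (4 * (real L)\<^sup>2) + B)"
    by (intro sum_mono add_right_mono divide_right_mono sq) auto
  also have "\<dots> = real (L-1) * (S / (4 * real L) + B)"
    using Lpos by (simp add: power2_eq_square)
  also have "\<dots> \<le> real L * (S / (4 * real L)) + real (L-1) * B"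
  proof -
    have "real (L-1) * (S / (4 * real L)) \<le> real L * (S / (4 * real L))"
      by (intro mult_right_mono) (use S0 Lpos in auto)
    then show ?thesis by (simp add: distrib_left)
  qed
  also have "\<dots> = S / 4 + real (L-1) * B" using Lpos by simp
  finally have W: "Wpot L W \<omega> g \<le> S / 4 + real (L-1) * B" .
  have "energy L W \<omega> g \<ge> S / 4 - real (L-1) * B"
    using W unfolding energy_def Dir_def S_def by simp
  moreover have "(g y)\<^sup>2 / (4 * real L) \<le> S / 4"
    using sq[OF y] Lpos by (simp add: field_simps)
  ultimately show ?thesis by simp
qed

lemma exists_min:
  fixes B :: real
  assumes L: "L \<ge> 2"
    and cont: "\<And>y. y \<in> {1..L-1} \<Longrightarrow> continuous_on UNIV (\<lambda>t. W y t \<omega>)"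
    and zero: "\<And>y. y \<in> {1..L-1} \<Longrightarrow> W y 0 \<omega> = 0"
    and grow: "\<And>y t. y \<in> {1..L-1} \<Longrightarrow> W y t \<omega> \<le> t\<^sup>2 / (4 * (real L)\<^sup>2) + B"
  shows "\<exists>h\<in>configs L. \<forall>g\<in>configs L. energy L W \<omega> h \<le> energy L W \<omega> g"
proof -
  define R where "R = sqrt (4 * real L * real (L-1) * \<bar>B\<bar>) + 1"
  define K where "K = (PiE UNIV (\<lambda>i. if i \<in> {1..L-1} then {-R..R} else {0::real}))"
  have Lpos: "(0::real) < real L" using L by simp
  have "compactin (product_topology (\<lambda>_. euclidean) UNIV) K"
    unfolding K_def
    by (rule iffD2[OF compactin_PiE]) auto
  then have cK: "compact K" by (simp add: euclidean_product_topology)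
  have "0 \<le> sqrt (4 * real L * real (L-1) * \<bar>B\<bar>)" by simp
  then have R0: "0 < R" unfolding R_def by linarith
  have zK: "(\<lambda>_. 0) \<in> K" unfolding K_def using R0 by auto
  then have "K \<noteq> {}" by auto
  from continuous_attains_inf[OF cK this continuous_on_subset[OF energy_cont[of L W \<omega>, OF cont]]]
  obtain h where hK: "h \<in> K" and hmin: "\<And>g. g \<in> K \<Longrightarrow> energy L W \<omega> h \<le> energy L W \<omega> g"
    by auto
  have hK': "h i \<in> (if i \<in> {1..L-1} then {-R..R} else {0::real})" for i
    using hK unfolding K_def by (simp add: PiE_iff)
  have hc: "h \<in> configs L" unfolding configs_def
  proof (intro CollectI conjI allI impI)
    show "h 0 = 0" using hK'[of 0] by simp
    have "L \<notin> {1..L-1}" using L by auto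
    then show "h L = 0" using hK'[of L] by (simp only: if_False) simp
    show "h x = 0" if "x > L" for x
    proof -
      have "x \<notin> {1..L-1}" using that by auto
      then show ?thesis using hK'[of x] by (simp only: if_False) simp
    qed
  qed
  have "energy L W \<omega> h \<le> energy L W \<omega> g" if g: "g \<in> configs L" for g
  proof (cases "g \<in> K")
    case True then show ?thesis by (rule hmin)
  next
    case False
    then obtain i where i: "g i \<notin> (if i \<in> {1..L-1} then {-R..R} else {0::real})"
      unfolding K_def by (auto simp: PiE_iff)
    have iL: "i \<in> {1..L-1}"
    proof (rule ccontr)
      assume ni: "i \<notin> {1..L-1}"
      then have "i = 0 \<or> i = L \<or> i > L" by auto
      then have "g i = 0" using g unfolding configs_def by auto
      with i ni show False by (simp only: if_False) simp
    qed
    with i have gi: "R < \<bar>g i\<bar>" by auto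
    have "R\<^sup>2 < (g i)\<^sup>2" using gi R0
      using power_strict_mono[of R "\<bar>g i\<bar>" 2] by simp
    moreover have "4 * real L * real (L-1) * \<bar>B\<bar> \<le> R\<^sup>2"
    proof -
      have "4 * real L * real (L-1) * \<bar>B\<bar> = (sqrt (4 * real L * real (L-1) * \<bar>B\<bar>))\<^sup>2"
        by simp
      also have "\<dots> \<le> R\<^sup>2" unfolding R_def
        by (intro power_mono) auto
      finally show ?thesis .
    qed
    ultimately have "4 * real L * (real (L-1) * \<bar>B\<bar>) < (g i)\<^sup>2" by (simp add: mult.assoc)
    then have "real (L-1) * \<bar>B\<bar> < (g i)\<^sup>2 / (4 * real L)"
      using Lpos by (subst pos_less_divide_eq) (auto simp: mult.commute)
    moreover have "(g i)\<^sup>2 / (4 * real L) - real (L - 1) * B \<le> energy L W \<omega> g"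
      by (rule energy_coercive[of L g W \<omega> B, OF L g grow]) (use iL in auto)
    moreover have "real (L-1) * B \<le> real (L-1) * \<bar>B\<bar>" by (intro mult_left_mono) auto
    ultimately have "0 < energy L W \<omega> g" by linarith
    moreover have "energy L W \<omega> h \<le> 0"
      using hmin[OF zK] energy_zero[of L W \<omega>, OF zero] by simp
    ultimately show ?thesis by simp
  qed
  with hc show ?thesis by blast
qed

definition cfg :: "nat \<Rightarrow> rat list \<Rightarrow> nat \<Rightarrow> real" where
  "cfg L qs = (\<lambda>y. if 1 \<le> y \<and> y \<le> L - 1 then of_rat (qs ! (y - 1)) else 0)"

definition Qset :: "nat \<Rightarrow> nat \<Rightarrow> real set \<Rightarrow> rat list set" where
  "Qset L x I = {qs. length qs = L - 1 \<and> of_rat (qs ! (x - 1)) \<in> I}"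

lemma cfg_configs: "L \<ge> 2 \<Longrightarrow> cfg L qs \<in> configs L"
  unfolding cfg_def configs_def by auto

lemma energy_tendsto:
  assumes cont: "\<And>y. y \<in> {1..L-1} \<Longrightarrow> continuous_on UNIV (\<lambda>t. W y t \<omega>)"
    and lim: "\<And>y. (\<lambda>n. g n y) \<longlonglongrightarrow> h y"
  shows "(\<lambda>n. energy L W \<omega> (g n)) \<longlonglongrightarrow> energy L W \<omega> h"
proof -
  have c: "((\<lambda>n. W y (g n y) \<omega>) \<longlonglongrightarrow> W y (h y) \<omega>)" if "y \<in> {1..L-1}" for y
  proof -
    have "isCont (\<lambda>t. W y t \<omega>) (h y)"
      using cont[OF that] by (simp add: continuous_on_eq_continuous_at)
    then show ?thesis by (rule isCont_tendsto_compose) (rule lim)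
  qed
  show ?thesis
    unfolding energy_def Dir_def Wpot_def
    by (intro tendsto_intros tendsto_sum c lim) auto
qed

lemma rat_approx:
  fixes u a b :: real
  assumes "0 < d" "P \<longrightarrow> u \<in> {a..b}" "a < b"
  shows "\<exists>q::rat. \<bar>of_rat q - u\<bar> < d \<and> (P \<longrightarrow> of_rat q \<in> {a..b})"
proof (cases P)
  case True
  then have u: "a \<le> u" "u \<le> b" using assms by auto
  have "max a (u - d) < min b (u + d)" using u assms by auto
  then obtain r where r: "r \<in> \<rat>" "max a (u - d) < r" "r < min b (u + d)"
    using Rats_dense_in_real by blast
  then obtain q where "r = of_rat q" by (auto elim: Rats_cases)
  then show ?thesis using r True by (intro exI[of _ q]) auto
next
  case False
  have "u - d < u + d" using assms by simp
  then obtain r where r: "r \<in> \<rat>" "u - d < r" "r < u + d"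
    using Rats_dense_in_real by blast
  then obtain q where "r = of_rat q" by (auto elim: Rats_cases)
  then show ?thesis using r False by (intro exI[of _ q]) auto
qed

lemma squeeze:
  fixes a b c :: real
  assumes L: "L \<ge> 2" and x: "x \<in> {1..L-1}" and ab: "a < b"
    and h: "h \<in> configs L" and hx: "h x \<in> {a..b}"
    and cont: "\<And>y. y \<in> {1..L-1} \<Longrightarrow> continuous_on UNIV (\<lambda>t. W y t \<omega>)"
    and hmin: "\<And>g. g \<in> configs L \<Longrightarrow> energy L W \<omega> h \<le> energy L W \<omega> g"
  shows "(INF qs\<in>Qset L x {a..b}. ereal (energy L W \<omega> (cfg L qs) + c)) = ereal (energy L W \<omega> h + c)"
proof (rule antisym)
  show "ereal (energy L W \<omega> h + c) \<le> (INF qs\<in>Qset L x {a..b}. ereal (energy L W \<omega> (cfg L qs) + c))"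
    by (intro INF_greatest) (simp add: hmin cfg_configs[OF L])
next
  define rr where "rr = (\<lambda>n y. SOME q::rat. \<bar>of_rat q - h y\<bar> < 1 / (real n + 1) \<and> (y = x \<longrightarrow> of_rat q \<in> {a..b}))"
  have rr: "\<bar>of_rat (rr n y) - h y\<bar> < 1 / (real n + 1) \<and> (y = x \<longrightarrow> of_rat (rr n y) \<in> {a..b})" for n y
    unfolding rr_def by (rule someI_ex, rule rat_approx) (use hx ab in auto)
  define qs where "qs = (\<lambda>n. map (rr n) [1..<L])"
  have qsn: "qs n ! (y - 1) = rr n y" if "1 \<le> y" "y \<le> L - 1" for n y
    using that L unfolding qs_def by (subst nth_map) auto
  have qsQ: "qs n \<in> Qset L x {a..b}" for n
    using rr[of n x] qsn[of x n] x unfolding Qset_def qs_def by auto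
  have lim: "(\<lambda>n. cfg L (qs n) y) \<longlonglongrightarrow> h y" for y
  proof (cases "1 \<le> y \<and> y \<le> L - 1")
    case True
    then have eq: "cfg L (qs n) y = of_rat (rr n y)" for n
      unfolding cfg_def using qsn by auto
    have "(\<lambda>n. of_rat (rr n y) - h y) \<longlonglongrightarrow> 0"
    proof (rule Lim_null_comparison[OF _ LIMSEQ_inverse_real_of_nat])
      show "\<forall>\<^sub>F n in sequentially. norm (of_rat (rr n y) - h y) \<le> inverse (real (Suc n))"
        using rr by (auto intro!: always_eventually less_imp_le simp: inverse_eq_divide add.commute)
    qed
    then have "(\<lambda>n. of_rat (rr n y) - h y + h y) \<longlonglongrightarrow> 0 + h y"
      by (intro tendsto_intros)
    then show ?thesis unfolding eq by simp
  next
    case False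
    then have "y = 0 \<or> y = L \<or> y > L" by auto
    then have "h y = 0" using h unfolding configs_def by auto
    moreover have "cfg L (qs n) y = 0" for n using False unfolding cfg_def by auto
    ultimately show ?thesis by simp
  qed
  have "(\<lambda>n. ereal (energy L W \<omega> (cfg L (qs n)) + c)) \<longlonglongrightarrow> ereal (energy L W \<omega> h + c)"
    by (intro tendsto_intros energy_tendsto[of L W \<omega> "\<lambda>n. cfg L (qs n)", OF cont lim])
  then show "(INF qs\<in>Qset L x {a..b}. ereal (energy L W \<omega> (cfg L qs) + c)) \<le> ereal (energy L W \<omega> h + c)"
    by (rule LIMSEQ_le_const) (auto intro!: exI[of _ 0] INF_lower qsQ)
qed



lemma (in prob_space) BM_incr_distr:
  assumes B: "two_sided_BM M B" and st: "s < t"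
  shows "distributed M lborel (\<lambda>\<omega>. B t \<omega> - B s \<omega>) (\<lambda>x. ennreal (normal_density 0 (sqrt (t - s)) x))"
proof -
  have "sorted_wrt (<) [s, t]" using st by simp
  with B have "\<forall>i < length [s,t] - 1. distributed M lborel (\<lambda>\<omega>. B ([s,t] ! Suc i) \<omega> - B ([s,t] ! i) \<omega>)
             (normal_density 0 (sqrt ([s,t] ! Suc i - [s,t] ! i)))"
    unfolding two_sided_BM_def by blast
  then show ?thesis by auto
qed

lemma (in prob_space) BM_meas:
  assumes B: "two_sided_BM M B"
  shows "B t \<in> borel_measurable M"
  using B unfolding two_sided_BM_def by blast

lemma (in prob_space) tail4_lt:
  assumes B: "two_sided_BM M B" and st: "s < t" and lam: "0 < lam"
  shows "prob {\<omega>\<in>space M. lam < \<bar>B t \<omega> - B s \<omega>\<bar>} \<le> 3 * (t - s)\<^sup>2 / lam ^ 4"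
proof -
  define X where "X = (\<lambda>\<omega>. B t \<omega> - B s \<omega>)"
  define \<sigma> where "\<sigma> = sqrt (t - s)"
  have sp: "0 < \<sigma>" using st unfolding \<sigma>_def by simp
  have D: "distributed M lborel X (\<lambda>x. ennreal (normal_density 0 \<sigma> x))"
    unfolding X_def \<sigma>_def by (rule BM_incr_distr[OF B st])
  have Xm[measurable]: "X \<in> borel_measurable M"
    unfolding X_def using BM_meas[OF B] by measurable
  have int: "integrable M (\<lambda>\<omega>. X \<omega> ^ 4)"
  proof -
    have "integrable lborel (\<lambda>x. normal_density 0 \<sigma> x * (x - 0) ^ 4)"
      by (rule integrable_normal_moment) (rule sp)
    then show ?thesis
      using distributed_integrable[OF D, of "\<lambda>x. x ^ 4"] by simp
  qed
  have E: "expectation (\<lambda>\<omega>. X \<omega> ^ 4) = 3 * (t - s)\<^sup>2"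
  proof -
    have "expectation (\<lambda>\<omega>. X \<omega> ^ 4) = (\<integral>x. normal_density 0 \<sigma> x * x ^ 4 \<partial>lborel)"
      using distributed_integral[OF D, of "\<lambda>x. x ^ 4"] by simp
    also have "\<dots> = fact (2 * 2) / ((2 / \<sigma>\<^sup>2)^2 * fact 2)"
      using integral_normal_moment_even[where k=2 and \<mu>=0 and \<sigma>=\<sigma>, OF sp] by simp
    also have "\<dots> = 3 * (\<sigma>\<^sup>2)\<^sup>2"
      using sp by (simp add: fact_numeral field_simps power2_eq_square)
    also have "\<dots> = 3 * (t - s)\<^sup>2" unfolding \<sigma>_def using st by simp
    finally show ?thesis .
  qed
  have "{\<omega>\<in>space M. lam < \<bar>B t \<omega> - B s \<omega>\<bar>} \<subseteq> {\<omega>\<in>space M. lam ^ 4 \<le> X \<omega> ^ 4}"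
  proof safe
    fix \<omega> assume "lam < \<bar>B t \<omega> - B s \<omega>\<bar>"
    then have "lam ^ 4 \<le> \<bar>X \<omega>\<bar> ^ 4" unfolding X_def using lam
      by (intro power_mono) auto
    then show "lam ^ 4 \<le> X \<omega> ^ 4" using power_even_abs[of 4 "X \<omega>"] by simp
  qed
  then have "prob {\<omega>\<in>space M. lam < \<bar>B t \<omega> - B s \<omega>\<bar>} \<le> prob {\<omega>\<in>space M. lam ^ 4 \<le> X \<omega> ^ 4}"
    by (intro finite_measure_mono) measurable
  also have "\<dots> \<le> expectation (\<lambda>\<omega>. X \<omega> ^ 4) / lam ^ 4"
    by (rule integral_Markov_inequality_measure[OF int, of "space M"]) (use lam in auto)
  finally show ?thesis unfolding E .
qed

lemma (in prob_space) tail4: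
  assumes B: "two_sided_BM M B" and lam: "0 < lam"
  shows "prob {\<omega>\<in>space M. lam < \<bar>B t \<omega> - B s \<omega>\<bar>} \<le> 3 * (t - s)\<^sup>2 / lam ^ 4"
proof (cases s t rule: linorder_cases)
  case less then show ?thesis by (rule tail4_lt[OF B _ lam])
next
  case equal then show ?thesis using lam by simp
next
  case greater
  have "{\<omega>\<in>space M. lam < \<bar>B t \<omega> - B s \<omega>\<bar>} = {\<omega>\<in>space M. lam < \<bar>B s \<omega> - B t \<omega>\<bar>}" by auto
  with tail4_lt[OF B greater lam] show ?thesis by (simp add: power2_commute)
qed

lemma chain_dyadic:
  fixes g :: "real \<Rightarrow> real" and \<delta> :: "nat \<Rightarrow> real"
  assumes inc: "\<And>k j. j < 2^k \<Longrightarrow> \<bar>g (real (Suc j) / 2^k) - g (real j / 2^k)\<bar> \<le> \<delta> k"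
  shows "j \<le> 2^K \<Longrightarrow> \<bar>g (real j / 2^K) - g 0\<bar> \<le> (\<Sum>k\<le>K. \<delta> k)"
proof (induction K arbitrary: j)
  case 0
  have d0: "0 \<le> \<delta> 0" using inc[of 0 0] by simp
  from 0 have "j = 0 \<or> j = 1" by auto
  then show ?case
  proof
    assume "j = 0" then show ?thesis using d0 by simp
  next
    assume "j = 1" then show ?thesis using inc[of 0 0] by simp
  qed
next
  case (Suc K)
  define j' where "j' = j div 2"
  have "\<bar>g (real (Suc 0) / 2^Suc K) - g (real 0 / 2^Suc K)\<bar> \<le> \<delta> (Suc K)" by (rule inc) simp
  then have dK: "0 \<le> \<delta> (Suc K)" by (meson abs_ge_zero order_trans)
  have j'le: "j' \<le> 2^K" using Suc.prems unfolding j'_def by auto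
  have eq: "real (2 * j') / 2 ^ Suc K = real j' / 2 ^ K" by simp
  have IH: "\<bar>g (real j' / 2^K) - g 0\<bar> \<le> (\<Sum>k\<le>K. \<delta> k)" by (rule Suc.IH[OF j'le])
  show ?case
  proof (cases "even j")
    case True
    then have "j = 2 * j'" unfolding j'_def by simp
    then have "g (real j / 2 ^ Suc K) = g (real j' / 2^K)" using eq by simp
    then show ?thesis using IH dK by simp
  next
    case False
    then have jj: "j = Suc (2 * j')" unfolding j'_def by simp
    then have "2 * j' < 2 ^ Suc K" using Suc.prems by simp
    from inc[OF this] have "\<bar>g (real j / 2 ^ Suc K) - g (real j' / 2^K)\<bar> \<le> \<delta> (Suc K)"
      using jj eq by simp
    then show ?thesis using IH by simp
  qed
qed

lemma nat_floor_bounds: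
  fixes x :: real assumes "0 \<le> x"
  shows "x - 1 \<le> real (nat \<lfloor>x\<rfloor>)" "real (nat \<lfloor>x\<rfloor>) \<le> x"
proof -
  have "0 \<le> \<lfloor>x\<rfloor>" using assms by simp
  then have e: "real (nat \<lfloor>x\<rfloor>) = of_int \<lfloor>x\<rfloor>" by simp
  show "x - 1 \<le> real (nat \<lfloor>x\<rfloor>)" unfolding e by linarith
  show "real (nat \<lfloor>x\<rfloor>) \<le> x" unfolding e by simp
qed

lemma chain_cont:
  fixes g :: "real \<Rightarrow> real" and \<delta> :: "nat \<Rightarrow> real"
  assumes cont: "continuous_on UNIV g"
    and inc: "\<And>k j. j < 2^k \<Longrightarrow> \<bar>g (real (Suc j) / 2^k) - g (real j / 2^k)\<bar> \<le> \<delta> k"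
    and d0: "\<And>k. 0 \<le> \<delta> k" and sd: "summable \<delta>"
    and t: "0 \<le> t" "t \<le> 1"
  shows "\<bar>g t - g 0\<bar> \<le> suminf \<delta>"
proof -
  define u where "u = (\<lambda>K::nat. real (nat \<lfloor>t * 2^K\<rfloor>) / 2^K)"
  have ule: "nat \<lfloor>t * 2^K\<rfloor> \<le> 2^K" for K :: nat
  proof -
    have "t * 2^K \<le> 2^K" using t by simp
    moreover have "real (nat \<lfloor>t * 2^K\<rfloor>) \<le> t * 2^K" using nat_floor_bounds(2)[of "t * 2^K"] t by simp
    ultimately have "real (nat \<lfloor>t * 2^K\<rfloor>) \<le> 2^K" by linarith
    then show ?thesis by (metis of_nat_le_iff of_nat_numeral of_nat_power)
  qed
  have bnd: "\<bar>g (u K) - g 0\<bar> \<le> suminf \<delta>" for K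
  proof -
    have "\<bar>g (u K) - g 0\<bar> \<le> (\<Sum>k\<le>K. \<delta> k)"
      unfolding u_def by (rule chain_dyadic[OF inc ule])
    also have "\<dots> \<le> suminf \<delta>"
      using sum_le_suminf[OF sd, of "{..K}"] d0 by auto
    finally show ?thesis .
  qed
  have ut: "u \<longlonglongrightarrow> t"
  proof (rule tendsto_sandwich[where f="\<lambda>K. t - 1 / 2^K" and h="\<lambda>K. t"])
    show "\<forall>\<^sub>F K in sequentially. t - 1 / 2 ^ K \<le> u K"
    proof (intro always_eventually allI)
      fix K :: nat
      have "t * 2^K - 1 \<le> real (nat \<lfloor>t * 2^K\<rfloor>)" using nat_floor_bounds(1)[of "t * 2^K"] t by simp
      then have "(t * 2^K - 1) / 2^K \<le> real (nat \<lfloor>t * 2^K\<rfloor>) / 2^K"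
        by (rule divide_right_mono) simp
      moreover have "(t * 2^K - 1) / 2^K = t - 1 / (2::real)^K" by (simp add: field_simps)
      ultimately show "t - 1 / 2 ^ K \<le> u K" unfolding u_def by simp
    qed
    show "\<forall>\<^sub>F K in sequentially. u K \<le> t"
    proof (intro always_eventually allI)
      fix K :: nat
      have "real (nat \<lfloor>t * 2^K\<rfloor>) \<le> t * 2^K" using nat_floor_bounds(2)[of "t * 2^K"] t by simp
      then show "u K \<le> t" unfolding u_def by (simp add: field_simps)
    qed
    have "(\<lambda>K. t - 1 / 2 ^ K) \<longlonglongrightarrow> t - 0"
      by (intro tendsto_intros LIMSEQ_divide_realpow_zero) auto
    then show "(\<lambda>K. t - 1 / 2 ^ K) \<longlonglongrightarrow> t" by simp
  qed simp
  have "(\<lambda>K. \<bar>g (u K) - g 0\<bar>) \<longlonglongrightarrow> \<bar>g t - g 0\<bar>"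
    using cont ut by (intro tendsto_intros) (auto intro: continuous_on_tendsto_compose[where s=UNIV])
  then show ?thesis by (rule LIMSEQ_le_const2) (auto intro: bnd)
qed

lemma pow_combine: "(a::real)^k * b^k / c^k = (a * b / c)^k"
  by (simp add: power_mult_distrib power_divide)

lemma (in prob_space) chain_level_bound:
  assumes B: "two_sided_BM M B" and \<sigma>: "\<bar>\<sigma>\<bar> = 1"
  shows "prob (\<Union>j\<in>{..<(2::nat)^k}. {\<omega>\<in>space M. (real m + 1) * (9/10)^k <
            \<bar>B (\<sigma> * (real m + real (Suc j) / 2^k)) \<omega> - B (\<sigma> * (real m + real j / 2^k)) \<omega>\<bar>})
         \<le> 3 / (real m + 1)^4 * (5000/6561)^k"
proof -
  have [measurable]: "\<And>t. B t \<in> borel_measurable M" using BM_meas[OF B] .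
  define lam where "lam = (real m + 1) * (9/10)^k"
  have lam: "0 < lam" unfolding lam_def by simp
  have each: "prob {\<omega>\<in>space M. lam < \<bar>B (\<sigma> * (real m + real (Suc j) / 2^k)) \<omega> - B (\<sigma> * (real m + real j / 2^k)) \<omega>\<bar>}
      \<le> 3 * (1/4)^k / lam^4" for j
  proof -
    have d: "(\<sigma> * (real m + real (Suc j) / 2^k) - \<sigma> * (real m + real j / 2^k))\<^sup>2 = (1/4)^k"
    proof -
      have "\<sigma> * (real m + real (Suc j) / 2^k) - \<sigma> * (real m + real j / 2^k) = \<sigma> / 2^k"
        by (simp add: field_simps)
      moreover have "\<sigma>\<^sup>2 = 1" using \<sigma> by (metis power2_abs power_one)
      moreover have "((2::real)^k)\<^sup>2 = 4^k"
        by (simp add: power2_eq_square power_mult_distrib[symmetric])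
      ultimately show ?thesis by (simp add: power_divide power_one_over)
    qed
    show ?thesis using tail4[OF B lam, of "\<sigma> * (real m + real (Suc j) / 2^k)" "\<sigma> * (real m + real j / 2^k)"] unfolding d .
  qed
  have "prob (\<Union>j\<in>{..<(2::nat)^k}. {\<omega>\<in>space M. lam <
            \<bar>B (\<sigma> * (real m + real (Suc j) / 2^k)) \<omega> - B (\<sigma> * (real m + real j / 2^k)) \<omega>\<bar>})
     \<le> (\<Sum>j\<in>{..<(2::nat)^k}. prob {\<omega>\<in>space M. lam <
            \<bar>B (\<sigma> * (real m + real (Suc j) / 2^k)) \<omega> - B (\<sigma> * (real m + real j / 2^k)) \<omega>\<bar>})"
    by (rule measure_UNION_le) auto
  also have "\<dots> \<le> (\<Sum>j\<in>{..<(2::nat)^k}. 3 * (1/4)^k / lam^4)"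
    by (rule sum_mono) (rule each)
  also have "\<dots> = 2^k * (3 * (1/4)^k / lam^4)" by simp
  also have "\<dots> = 3 / (real m + 1)^4 * (5000/6561)^k"
  proof -
    have e1: "lam^4 = (real m + 1)^4 * (6561/10000)^k"
    proof -
      have "((9/10::real)^k)^4 = ((9/10)^4)^k" by (simp only: power_mult[symmetric] mult.commute)
      moreover have "(9/10::real)^4 = 6561/10000" by (simp add: power_divide)
      ultimately show ?thesis unfolding lam_def by (simp add: power_mult_distrib)
    qed
    have e2: "(2::real)^k * (1/4)^k / (6561/10000)^k = (5000/6561)^k"
      by (subst pow_combine) simp
    have "2^k * (3 * (1/4)^k / lam^4) = 3 / (real m + 1)^4 * ((2::real)^k * (1/4)^k / (6561/10000)^k)"
      unfolding e1 by simp
    then show ?thesis unfolding e2 .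
  qed
  finally show ?thesis unfolding lam_def .
qed

definition chainev :: "'a measure \<Rightarrow> (real \<Rightarrow> 'a \<Rightarrow> real) \<Rightarrow> real \<Rightarrow> nat \<Rightarrow> 'a set" where
  "chainev M B \<sigma> m = (\<Union>k. \<Union>j\<in>{..<(2::nat)^k}. {\<omega>\<in>space M. (real m + 1) * (9/10)^k <
            \<bar>B (\<sigma> * (real m + real (Suc j) / 2^k)) \<omega> - B (\<sigma> * (real m + real j / 2^k)) \<omega>\<bar>})"

definition startev :: "'a measure \<Rightarrow> (real \<Rightarrow> 'a \<Rightarrow> real) \<Rightarrow> real \<Rightarrow> nat \<Rightarrow> 'a set" where
  "startev M B \<sigma> m = {\<omega>\<in>space M. real m + 1 < \<bar>B (\<sigma> * real m) \<omega> - B 0 \<omega>\<bar>}"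

lemma (in prob_space) chainev_sets:
  assumes B: "two_sided_BM M B"
  shows "chainev M B \<sigma> m \<in> events" "startev M B \<sigma> m \<in> events"
proof -
  have [measurable]: "\<And>t. B t \<in> borel_measurable M" using BM_meas[OF B] .
  show "chainev M B \<sigma> m \<in> events" unfolding chainev_def by measurable
  show "startev M B \<sigma> m \<in> events" unfolding startev_def by measurable
qed

lemma (in prob_space) chainev_bound:
  assumes B: "two_sided_BM M B" and \<sigma>: "\<bar>\<sigma>\<bar> = 1"
  shows "prob (chainev M B \<sigma> m) \<le> 3 / (real m + 1)^4 * (6561/1561)"
proof -
  have [measurable]: "\<And>t. B t \<in> borel_measurable M" using BM_meas[OF B] .
  define F where "F = (\<lambda>k. \<Union>j\<in>{..<(2::nat)^k}. {\<omega>\<in>space M. (real m + 1) * (9/10)^k <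
            \<bar>B (\<sigma> * (real m + real (Suc j) / 2^k)) \<omega> - B (\<sigma> * (real m + real j / 2^k)) \<omega>\<bar>})"
  have Fs: "F k \<in> events" for k unfolding F_def by measurable
  have Fb: "prob (F k) \<le> 3 / (real m + 1)^4 * (5000/6561)^k" for k
    unfolding F_def by (rule chain_level_bound[OF B \<sigma>])
  have sg: "summable (\<lambda>k. 3 / (real m + 1)^4 * (5000/6561::real)^k)"
    by (intro summable_mult summable_geometric) simp
  have sF: "summable (\<lambda>k. prob (F k))"
    by (rule summable_comparison_test'[OF sg, of 0]) (use Fb in simp)
  have "prob (chainev M B \<sigma> m) = prob (\<Union>k. F k)" unfolding chainev_def F_def ..
  also have "\<dots> \<le> (\<Sum>k. prob (F k))"
    by (rule finite_measure_subadditive_countably) (use Fs sF in auto)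
  also have "\<dots> \<le> (\<Sum>k. 3 / (real m + 1)^4 * (5000/6561::real)^k)"
    by (rule suminf_le[OF Fb sF sg])
  also have "\<dots> = 3 / (real m + 1)^4 * (\<Sum>k. (5000/6561::real)^k)"
    by (rule suminf_mult) (rule summable_geometric, simp)
  also have "(\<Sum>k. (5000/6561::real)^k) = 6561/1561"
    by (subst suminf_geometric) simp_all
  finally show ?thesis .
qed

lemma (in prob_space) startev_bound:
  assumes B: "two_sided_BM M B" and \<sigma>: "\<bar>\<sigma>\<bar> = 1"
  shows "prob (startev M B \<sigma> m) \<le> 3 / (real m + 1)^2"
proof -
  have "prob (startev M B \<sigma> m) \<le> 3 * (\<sigma> * real m - 0)\<^sup>2 / (real m + 1)^4"
    unfolding startev_def by (rule tail4[OF B]) simp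
  also have "\<dots> = 3 * (real m)\<^sup>2 / (real m + 1)^4"
    using \<sigma> by (simp add: power_mult_distrib) (metis power2_abs power_one)
  also have "\<dots> \<le> 3 * (real m + 1)\<^sup>2 / (real m + 1)^4"
    by (intro divide_right_mono mult_left_mono power_mono) auto
  also have "\<dots> = 3 / (real m + 1)^2"
  proof -
    have e: "(real m + 1)^4 = (real m + 1)^2 * (real m + 1)^2"
      by (subst power_add[symmetric]) simp
    have "(real m + 1)^2 > 0" by simp
    then show ?thesis unfolding e by (simp add: field_simps)
  qed
  finally show ?thesis .
qed

lemma growth_det:
  fixes f :: "real \<Rightarrow> real"
  assumes cont: "continuous_on UNIV f" and f0: "f 0 = 0"
    and N: "\<And>m \<sigma> k j. m \<ge> N \<Longrightarrow> \<bar>\<sigma>\<bar> = 1 \<Longrightarrow> j < 2^k \<Longrightarrow>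
        \<bar>f (\<sigma> * (real m + real (Suc j) / 2^k)) - f (\<sigma> * (real m + real j / 2^k))\<bar> \<le> (real m + 1) * (9/10)^k"
    and N0: "\<And>m \<sigma>. m \<ge> N \<Longrightarrow> \<bar>\<sigma>\<bar> = 1 \<Longrightarrow> \<bar>f (\<sigma> * real m) - f 0\<bar> \<le> real m + 1"
  shows "\<exists>A C. \<forall>u. \<bar>f u\<bar> \<le> A * \<bar>u\<bar> + C"
proof -
  have loc: "\<bar>f (\<sigma> * (real m + t))\<bar> \<le> 11 * (real m + 1)"
    if m: "m \<ge> N" and \<sigma>: "\<bar>\<sigma>\<bar> = 1" and t: "0 \<le> t" "t \<le> 1" for m \<sigma> t
  proof -
    define \<delta> where "\<delta> = (\<lambda>k::nat. (real m + 1) * (9/10::real)^k)"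
    have sd: "summable \<delta>" unfolding \<delta>_def by (intro summable_mult summable_geometric) simp
    have sum: "suminf \<delta> = (real m + 1) * 10"
    proof -
      have "suminf \<delta> = (real m + 1) * (\<Sum>k. (9/10::real)^k)"
        unfolding \<delta>_def by (rule suminf_mult) (rule summable_geometric, simp)
      also have "(\<Sum>k. (9/10::real)^k) = 10" by (subst suminf_geometric) simp_all
      finally show ?thesis .
    qed
    have gc: "continuous_on UNIV (\<lambda>u. f (\<sigma> * (real m + u)))"
      by (rule continuous_on_compose2[OF cont]) (auto intro!: continuous_intros)
    have "\<bar>f (\<sigma> * (real m + t)) - f (\<sigma> * (real m + 0))\<bar> \<le> suminf \<delta>"
      apply (rule chain_cont[OF gc _ _ sd t])
      subgoal for k j unfolding \<delta>_def by (rule N[OF m \<sigma>])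
      subgoal unfolding \<delta>_def by simp
      done
    moreover have "\<bar>f (\<sigma> * real m)\<bar> \<le> real m + 1" using N0[OF m \<sigma>] f0 by simp
    ultimately show ?thesis unfolding sum by simp
  qed
  obtain u0 where "u0 \<in> {-real N..real N}" and u0: "\<And>u. u \<in> {-real N..real N} \<Longrightarrow> \<bar>f u\<bar> \<le> \<bar>f u0\<bar>"
    using continuous_attains_sup[OF compact_Icc _ continuous_on_subset[OF continuous_on_rabs[OF cont]],
        of "-real N" "real N"] by auto
  define Cm where "Cm = \<bar>f u0\<bar>"
  have "\<bar>f u\<bar> \<le> 11 * \<bar>u\<bar> + (Cm + 11)" for u
  proof (cases "\<bar>u\<bar> \<le> real N")
    case True
    then have "\<bar>f u\<bar> \<le> Cm" unfolding Cm_def by (intro u0) auto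
    then show ?thesis by simp
  next
    case False
    define m where "m = nat \<lfloor>\<bar>u\<bar>\<rfloor>"
    define t where "t = \<bar>u\<bar> - real m"
    define \<sigma> where "\<sigma> = (if u \<ge> 0 then 1 else (-1::real))"
    have mb: "\<bar>u\<bar> - 1 \<le> real m" "real m \<le> \<bar>u\<bar>" unfolding m_def using nat_floor_bounds[of "\<bar>u\<bar>"] by auto
    have mN: "m \<ge> N"
    proof -
      have "real N \<le> \<bar>u\<bar>" using False by simp
      then have "int N \<le> \<lfloor>\<bar>u\<bar>\<rfloor>" by (simp add: le_floor_iff)
      then show ?thesis unfolding m_def by simp
    qed
    have s1: "\<bar>\<sigma>\<bar> = 1" unfolding \<sigma>_def by simp
    have ueq: "u = \<sigma> * (real m + t)" unfolding \<sigma>_def t_def by auto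
    have "\<bar>f u\<bar> \<le> 11 * (real m + 1)"
      unfolding ueq by (rule loc[OF mN s1]) (use mb in \<open>auto simp: t_def\<close>)
    also have "\<dots> \<le> 11 * \<bar>u\<bar> + 11" using mb by simp
    finally show ?thesis using Cm_def by simp
  qed
  then show ?thesis by blast
qed

lemma summable_inv_sq: "summable (\<lambda>m. c / (real m + 1)^2)"
proof -
  have "summable (\<lambda>n. inverse (real n ^ 2))" by (rule inverse_power_summable) simp
  then have "summable (\<lambda>n. inverse (real (Suc n) ^ 2))" by (subst summable_Suc_iff)
  then have "summable (\<lambda>n. c * inverse (real (Suc n) ^ 2))" by (rule summable_mult)
  then show ?thesis by (simp add: divide_inverse add.commute)
qed

lemma (in prob_space) BM_growth:
  assumes B: "two_sided_BM M B"
  shows "AE \<omega> in M. \<exists>A C. \<forall>u. \<bar>B u \<omega>\<bar> \<le> A * \<bar>u\<bar> + C"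
proof -
  define E where "E m = chainev M B 1 m \<union> chainev M B (-1) m \<union> startev M B 1 m \<union> startev M B (-1) m" for m
  have Es: "E m \<in> events" for m unfolding E_def using chainev_sets[OF B] by auto
  have Eb: "prob (E m) \<le> 32 / (real m + 1)^2" for m
  proof -
    have c1: "prob (chainev M B 1 m) \<le> 3 / (real m + 1)^4 * (6561/1561)" by (rule chainev_bound[OF B]) simp
    have c2: "prob (chainev M B (-1) m) \<le> 3 / (real m + 1)^4 * (6561/1561)" by (rule chainev_bound[OF B]) simp
    have s1: "prob (startev M B 1 m) \<le> 3 / (real m + 1)^2" by (rule startev_bound[OF B]) simp
    have s2: "prob (startev M B (-1) m) \<le> 3 / (real m + 1)^2" by (rule startev_bound[OF B]) simp
    have p4: "1 / (real m + 1)^4 \<le> 1 / (real m + 1)^2"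
      by (intro divide_left_mono power_increasing) auto
    have "prob (E m) \<le> prob (chainev M B 1 m) + prob (chainev M B (-1) m) + prob (startev M B 1 m) + prob (startev M B (-1) m)"
      unfolding E_def using chainev_sets[OF B]
      by (meson add_right_mono measure_Un_le order_trans sets.Un)
    also have "\<dots> \<le> 6 * (6561/1561) * (1 / (real m + 1)^4) + 6 * (1 / (real m + 1)^2)"
      using c1 c2 s1 s2 by simp
    also have "\<dots> \<le> 6 * (6561/1561) * (1 / (real m + 1)^2) + 6 * (1 / (real m + 1)^2)"
      using p4 by simp
    also have "\<dots> \<le> 32 / (real m + 1)^2" by (simp add: field_simps)
    finally show ?thesis .
  qed
  have sE: "summable (\<lambda>m. prob (E m))"
    by (rule summable_comparison_test'[OF summable_inv_sq[of 32], of 0]) (use Eb in simp)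
  have "AE \<omega> in M. eventually (\<lambda>m. \<omega> \<in> space M - E m) sequentially"
    by (rule borel_cantelli_AE1) (use Es sE in \<open>auto simp: emeasure_eq_measure\<close>)
  then show ?thesis
  proof (rule AE_mp[OF _ AE_I2[OF impI]])
    fix \<omega> assume \<omega>: "\<omega> \<in> space M" and ev: "eventually (\<lambda>m. \<omega> \<in> space M - E m) sequentially"
    then obtain N where N: "\<And>m. m \<ge> N \<Longrightarrow> \<omega> \<notin> E m" by (auto simp: eventually_sequentially)
    have cont: "continuous_on UNIV (\<lambda>u. B u \<omega>)" and f0: "B 0 \<omega> = 0"
      using B \<omega> unfolding two_sided_BM_def by auto
    have s: "\<sigma> = 1 \<or> \<sigma> = -1" if "\<bar>\<sigma>\<bar> = 1" for \<sigma> :: real using that by auto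
    show "\<exists>A C. \<forall>u. \<bar>B u \<omega>\<bar> \<le> A * \<bar>u\<bar> + C"
    proof (rule growth_det[OF cont f0])
      fix m k j :: nat and \<sigma> :: real assume m: "m \<ge> N" and \<sigma>: "\<bar>\<sigma>\<bar> = 1" and j: "j < 2^k"
      have "\<omega> \<notin> chainev M B \<sigma> m" using N[OF m] s[OF \<sigma>] unfolding E_def by auto
      then show "\<bar>B (\<sigma> * (real m + real (Suc j) / 2 ^ k)) \<omega> - B (\<sigma> * (real m + real j / 2 ^ k)) \<omega>\<bar> \<le> (real m + 1) * (9 / 10) ^ k"
        using \<omega> j unfolding chainev_def by (auto simp: not_less)
    next
      fix m and \<sigma> :: real assume m: "m \<ge> N" and \<sigma>: "\<bar>\<sigma>\<bar> = 1"
      have "\<omega> \<notin> startev M B \<sigma> m" using N[OF m] s[OF \<sigma>] unfolding E_def by auto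
      then show "\<bar>B (\<sigma> * real m) \<omega> - B 0 \<omega>\<bar> \<le> real m + 1"
        using \<omega> unfolding startev_def by (auto simp: not_less)
    qed
  qed
qed



definition relpath :: "(real \<Rightarrow> 'a \<Rightarrow> real) \<Rightarrow> real \<Rightarrow> real \<Rightarrow> real \<Rightarrow> real \<Rightarrow> 'a \<Rightarrow> real \<Rightarrow> real" where
  "relpath B a b c d \<omega> t = (if t \<in> {a..b} then B t \<omega> - B b \<omega> else if t \<in> {c..d} then B t \<omega> - B c \<omega> else 0)"

lemma (in prob_space) site_fd:
  assumes B: "two_sided_BM M B" and abcd: "a \<le> b" "b < c" "c \<le> d"
    and J: "finite J" and S: "S \<in> sets borel" and E: "\<And>t. t \<in> J \<Longrightarrow> E t \<in> sets borel"
  shows "prob {\<omega>\<in>space M. B c \<omega> - B b \<omega> \<in> S \<and> (\<forall>t\<in>J. relpath B a b c d \<omega> t \<in> E t)} =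
         prob {\<omega>\<in>space M. B c \<omega> - B b \<omega> \<in> S} * prob {\<omega>\<in>space M. \<forall>t\<in>J. relpath B a b c d \<omega> t \<in> E t}"
proof -
  have [measurable]: "\<And>t. B t \<in> borel_measurable M" using BM_meas[OF B] .
  define T where "T = (J \<inter> ({a..b} \<union> {c..d})) \<union> {b, c}"
  have fT: "finite T" using J by (simp add: T_def)
  obtain ts where ts: "sorted_wrt (<) ts" "set ts = T"
    using ex1_sorted_list_for_set_if_finite[OF fT] by blast
  define n where "n = length ts"
  have mono: "ts!i < ts!j" if "i < j" "j < n" for i j
    using sorted_wrt_nth_less[OF ts(1) that[unfolded n_def]] .
  have mono_iff: "ts!i < ts!j \<longleftrightarrow> i < j" if "i < n" "j < n" for i j
    using mono[of i j] mono[of j i] that by (metis less_asym' linorder_neqE_nat)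
  have mono_le: "ts!i \<le> ts!j \<longleftrightarrow> i \<le> j" if "i < n" "j < n" for i j
    using mono_iff[OF that(2,1)] by linarith
  have inT: "ts!i \<in> T" if "i < n" for i using ts(2) that n_def nth_mem by blast
  have idx_ex: "\<exists>i. i < n \<and> ts!i = t" if "t \<in> T" for t
    using that ts(2) n_def by (metis in_set_conv_nth)
  define idx where "idx t = (SOME i. i < n \<and> ts!i = t)" for t
  have idx: "idx t < n \<and> ts!(idx t) = t" if "t \<in> T" for t
    unfolding idx_def by (rule someI_ex) (rule idx_ex[OF that])
  define k where "k = idx b"
  have k: "k < n" "ts!k = b" using idx[of b] by (auto simp: T_def k_def)
  have ci: "idx c < n" "ts!(idx c) = c" using idx[of c] by (auto simp: T_def)
  have kc: "k < idx c" using mono_iff[OF k(1) ci(1)] k ci abcd by simp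
  then have k1: "Suc k < n" using ci by simp
  have tsk1: "ts!(Suc k) = c"
  proof -
    have "ts!(Suc k) \<in> T" by (rule inT[OF k1])
    moreover have "b < ts!(Suc k)" using mono[of k "Suc k"] k k1 by simp
    ultimately have "c \<le> ts!(Suc k)" unfolding T_def using abcd by auto
    moreover have "ts!(Suc k) \<le> c" using mono_le[OF k1 ci(1)] kc ci by simp
    ultimately show ?thesis by simp
  qed
  define D where "D i \<omega> = B (ts!Suc i) \<omega> - B (ts!i) \<omega>" for i \<omega>
  have indD: "indep_vars (\<lambda>_. borel) D {..<n-1}"
    using B ts(1) unfolding two_sided_BM_def D_def n_def by blast
  define R where "R = {..<n-1} - {k}"
  define Kf where "Kf = case_bool {k} R"
  have i0: "indep_vars (\<lambda>j. PiM (Kf j) (\<lambda>_. borel)) (\<lambda>j \<omega>. restrict (\<lambda>i. D i \<omega>) (Kf j)) UNIV"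
    by (rule indep_vars_restrict[OF indD]) (use k1 in \<open>auto simp: Kf_def R_def disjoint_family_on_def split: bool.split\<close>)
  have e1: "(\<lambda>j. PiM (Kf j) (\<lambda>_. borel)) = case_bool (PiM {k} (\<lambda>_. borel)) (PiM R (\<lambda>_. borel))"
    by (auto simp: fun_eq_iff Kf_def split: bool.split)
  have e2: "(\<lambda>j \<omega>. restrict (\<lambda>i. D i \<omega>) (Kf j)) = case_bool (\<lambda>\<omega>. restrict (\<lambda>i. D i \<omega>) {k}) (\<lambda>\<omega>. restrict (\<lambda>i. D i \<omega>) R)"
    by (auto simp: fun_eq_iff Kf_def split: bool.split)
  have ind: "indep_var (PiM {k} (\<lambda>_. borel)) (\<lambda>\<omega>. restrict (\<lambda>i. D i \<omega>) {k})
      (PiM R (\<lambda>_. borel)) (\<lambda>\<omega>. restrict (\<lambda>i. D i \<omega>) R)"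
    unfolding indep_var_def using i0 unfolding e1 e2 .
  define cf where "cf t i = (if t \<in> {a..b} then (if idx t \<le> i \<and> i < k then -1 else 0)
      else if t \<in> {c..d} then (if Suc k \<le> i \<and> i < idx t then 1 else (0::real)) else 0)" for t i
  define \<psi> where "\<psi> t v = (\<Sum>i\<in>R. cf t i * v i)" for t and v :: "nat \<Rightarrow> real"
  have fR: "finite R" unfolding R_def by simp
  have key: "relpath B a b c d \<omega> t = (\<Sum>i\<in>R. cf t i * D i \<omega>)" if t: "t \<in> J" for \<omega> t
  proof (cases "t \<in> {a..b}")
    case True
    then have tT: "t \<in> T" using t by (auto simp: T_def)
    have it: "idx t < n" "ts!(idx t) = t" using idx[OF tT] by auto
    have ik: "idx t \<le> k" using mono_le[OF it(1) k(1)] it k True by simp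
    have "(\<Sum>i\<in>R. cf t i * D i \<omega>) = (\<Sum>i\<in>{idx t..<k}. - (B (ts!Suc i) \<omega> - B (ts!i) \<omega>))"
      by (rule sum.mono_neutral_cong_right[OF fR]) (use True k1 in \<open>auto simp: R_def cf_def D_def\<close>)
    also have "\<dots> = - (\<Sum>i\<in>{idx t..<k}. B (ts!Suc i) \<omega> - B (ts!i) \<omega>)" by (rule sum_negf)
    also have "\<dots> = - (B (ts!k) \<omega> - B (ts!(idx t)) \<omega>)"
      using sum_Suc_diff'[OF ik, of "\<lambda>i. B (ts!i) \<omega>"] by simp
    finally show ?thesis using True it k unfolding relpath_def by simp
  next
    case False
    show ?thesis
    proof (cases "t \<in> {c..d}")
      case True
      then have tT: "t \<in> T" using t by (auto simp: T_def)
      have it: "idx t < n" "ts!(idx t) = t" using idx[OF tT] by auto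
      have "b < t" using True abcd by simp
      then have ik: "Suc k \<le> idx t" using mono_iff[OF k(1) it(1)] it k by simp
      have "(\<Sum>i\<in>R. cf t i * D i \<omega>) = (\<Sum>i\<in>{Suc k..<idx t}. B (ts!Suc i) \<omega> - B (ts!i) \<omega>)"
        by (rule sum.mono_neutral_cong_right[OF fR]) (use True False it in \<open>auto simp: R_def cf_def D_def\<close>)
      also have "\<dots> = B (ts!(idx t)) \<omega> - B (ts!(Suc k)) \<omega>"
        using sum_Suc_diff'[OF ik, of "\<lambda>i. B (ts!i) \<omega>"] by simp
      finally show ?thesis using True False it tsk1 unfolding relpath_def by auto
    next
      case False2: False
      then have "cf t i = 0" for i using False unfolding cf_def by simp
      then show ?thesis using False False2 unfolding relpath_def by auto
    qed
  qed
  have \<psi>m: "\<psi> t \<in> borel_measurable (PiM R (\<lambda>_. borel))" for t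
    unfolding \<psi>_def by measurable
  define X1 where "X1 = {v\<in>space (PiM {k} (\<lambda>_. borel::real measure)). v k \<in> S}"
  define X2 where "X2 = {v\<in>space (PiM R (\<lambda>_. borel::real measure)). \<forall>t\<in>J. \<psi> t v \<in> E t}"
  have X1s: "X1 \<in> sets (PiM {k} (\<lambda>_. borel))"
  proof -
    have "X1 = (\<lambda>v. v k) -` S \<inter> space (PiM {k} (\<lambda>_. borel::real measure))" unfolding X1_def by auto
    also have "\<dots> \<in> sets (PiM {k} (\<lambda>_. borel))"
      by (rule measurable_sets[OF measurable_component_singleton[of k "{k}" "\<lambda>_. borel"] S]) simp
    finally show ?thesis .
  qed
  have X2s: "X2 \<in> sets (PiM R (\<lambda>_. borel))"
    unfolding X2_def
  proof (rule sets.sets_Collect_finite_All[OF _ J])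
    fix t assume "t \<in> J"
    have "{v \<in> space (PiM R (\<lambda>_. borel::real measure)). \<psi> t v \<in> E t} = \<psi> t -` E t \<inter> space (PiM R (\<lambda>_. borel))" by auto
    also have "\<dots> \<in> sets (PiM R (\<lambda>_. borel))" by (rule measurable_sets[OF \<psi>m E[OF \<open>t \<in> J\<close>]])
    finally show "{v \<in> space (PiM R (\<lambda>_. borel::real measure)). \<psi> t v \<in> E t} \<in> sets (PiM R (\<lambda>_. borel))" .
  qed
  have V1: "restrict (\<lambda>i. D i \<omega>) {k} k = B c \<omega> - B b \<omega>" for \<omega>
    using k tsk1 by (simp add: D_def)
  have V2: "\<psi> t (restrict (\<lambda>i. D i \<omega>) R) = relpath B a b c d \<omega> t" if "t \<in> J" for t \<omega>
    unfolding key[OF that] \<psi>_def by (intro sum.cong) auto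
  have e1: "{\<omega>\<in>space M. B c \<omega> - B b \<omega> \<in> S \<and> (\<forall>t\<in>J. relpath B a b c d \<omega> t \<in> E t)} =
      (\<lambda>\<omega>. (restrict (\<lambda>i. D i \<omega>) {k}, restrict (\<lambda>i. D i \<omega>) R)) -` (X1 \<times> X2) \<inter> space M"
    unfolding X1_def X2_def using V1 V2 by (auto simp: space_PiM)
  have e2: "{\<omega>\<in>space M. B c \<omega> - B b \<omega> \<in> S} = (\<lambda>\<omega>. restrict (\<lambda>i. D i \<omega>) {k}) -` X1 \<inter> space M"
    unfolding X1_def using V1 by (auto simp: space_PiM)
  have e3: "{\<omega>\<in>space M. \<forall>t\<in>J. relpath B a b c d \<omega> t \<in> E t} = (\<lambda>\<omega>. restrict (\<lambda>i. D i \<omega>) R) -` X2 \<inter> space M"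
    unfolding X2_def using V2 by (auto simp: space_PiM)
  show ?thesis unfolding e1 e2 e3 by (rule indep_varD[OF ind X1s X2s])
qed

lemma (in prob_space) indep_var_cyl:
  fixes Z :: "'a \<Rightarrow> real" and Y :: "'a \<Rightarrow> 'i \<Rightarrow> real"
  assumes Zm: "Z \<in> borel_measurable M" and Ym: "\<And>i. (\<lambda>\<omega>. Y \<omega> i) \<in> borel_measurable M"
    and fd: "\<And>J E S. finite J \<Longrightarrow> S \<in> sets borel \<Longrightarrow> (\<And>i. i \<in> J \<Longrightarrow> E i \<in> sets borel) \<Longrightarrow>
       prob {\<omega>\<in>space M. Z \<omega> \<in> S \<and> (\<forall>i\<in>J. Y \<omega> i \<in> E i)} =
       prob {\<omega>\<in>space M. Z \<omega> \<in> S} * prob {\<omega>\<in>space M. \<forall>i\<in>J. Y \<omega> i \<in> E i}"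
    and gm: "g \<in> borel_measurable (PiM UNIV (\<lambda>_::'i. borel::real measure))"
  shows "indep_var borel Z borel (\<lambda>\<omega>. g (Y \<omega>) :: real)"
proof -
  let ?P = "PiM (UNIV::'i set) (\<lambda>_. borel::real measure)"
  have Ymeas: "Y \<in> measurable M ?P"
    using measurable_PiM_single'[of UNIV "\<lambda>i \<omega>. Y \<omega> i" M "\<lambda>_. borel"] Ym by auto
  define ZG where "ZG = {Z -` A \<inter> space M | A. A \<in> sets (borel::real measure)}"
  define G where "G = {Y -` A \<inter> space M | A. A \<in> prod_algebra UNIV (\<lambda>_::'i. borel::real measure)}"
  have sigG: "sigma_sets (space M) {Y -` A \<inter> space M | A. A \<in> sets ?P} = sigma_sets (space M) G"
  proof -
    have "{Y -` A \<inter> space M | A. A \<in> sets ?P} = sigma_sets (space M) G"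
      unfolding sets_PiM G_def
      by (rule sigma_sets_vimage_commute) (use Ymeas measurable_space in \<open>auto simp: space_PiM\<close>)
    moreover have "sigma_sets (space M) (sigma_sets (space M) G) = sigma_sets (space M) G"
      by (rule sigma_sets_sigma_sets_eq) (auto simp: G_def)
    ultimately show ?thesis by simp
  qed
  have ZGs: "Int_stable ZG"
    unfolding ZG_def
  proof (safe intro!: Int_stableI)
    fix A B :: "real set" assume "A \<in> sets borel" "B \<in> sets borel"
    then show "\<exists>C. (Z -` A \<inter> space M) \<inter> (Z -` B \<inter> space M) = (Z -` C \<inter> space M) \<and> C \<in> sets borel"
      by (intro exI[of _ "A \<inter> B"]) auto
  qed
  have Gs: "Int_stable G"
    unfolding G_def
  proof (safe intro!: Int_stableI)
    fix A B assume "A \<in> prod_algebra UNIV (\<lambda>_::'i. borel::real measure)" "B \<in> prod_algebra UNIV (\<lambda>_::'i. borel::real measure)"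
    then show "\<exists>C. (Y -` A \<inter> space M) \<inter> (Y -` B \<inter> space M) = (Y -` C \<inter> space M) \<and> C \<in> prod_algebra UNIV (\<lambda>_. borel)"
      using Int_stable_prod_algebra unfolding Int_stable_def
      by (intro exI[of _ "A \<inter> B"]) auto
  qed
  have ind: "indep_set ZG G"
    unfolding indep_sets2_eq
  proof (intro conjI ballI)
    show "ZG \<subseteq> events" unfolding ZG_def using Zm by (auto intro: measurable_sets)
    show "G \<subseteq> events" unfolding G_def using Ymeas sets_PiM_I_countable
      by (auto intro!: measurable_sets[OF Ymeas] simp: sets_PiM intro: sigma_sets.Basic)
    fix a b assume a: "a \<in> ZG" and b: "b \<in> G"
    from a obtain S where S: "S \<in> sets borel" "a = Z -` S \<inter> space M" unfolding ZG_def by auto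
    from b obtain A where A: "A \<in> prod_algebra UNIV (\<lambda>_::'i. borel::real measure)" "b = Y -` A \<inter> space M"
      unfolding G_def by auto
    from prod_algebraE[OF A(1)] obtain J E where JE: "A = prod_emb UNIV (\<lambda>_. borel) J (PiE J E)"
      "finite J" "\<And>i. i \<in> J \<Longrightarrow> E i \<in> sets borel" by metis
    have bb: "b = {\<omega>\<in>space M. \<forall>i\<in>J. Y \<omega> i \<in> E i}"
      unfolding A(2) JE(1) by (auto simp: prod_emb_def PiE_iff)
    have aa: "a = {\<omega>\<in>space M. Z \<omega> \<in> S}" unfolding S(2) by auto
    have ab: "a \<inter> b = {\<omega>\<in>space M. Z \<omega> \<in> S \<and> (\<forall>i\<in>J. Y \<omega> i \<in> E i)}" unfolding aa bb by auto
    show "prob (a \<inter> b) = prob a * prob b"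
      unfolding ab unfolding aa bb by (rule fd[OF JE(2) S(1) JE(3)])
  qed
  have big: "indep_set (sigma_sets (space M) ZG) (sigma_sets (space M) G)"
    by (rule indep_set_sigma_sets[OF ind ZGs Gs])
  have gY: "(\<lambda>\<omega>. g (Y \<omega>)) \<in> borel_measurable M" using gm Ymeas by measurable
  have sub: "sigma_sets (space M) {(\<lambda>\<omega>. g (Y \<omega>)) -` A \<inter> space M | A. A \<in> sets borel} \<subseteq> sigma_sets (space M) G"
  proof -
    have "{(\<lambda>\<omega>. g (Y \<omega>)) -` A \<inter> space M | A. A \<in> sets borel} \<subseteq> {Y -` A \<inter> space M | A. A \<in> sets ?P}"
    proof safe
      fix A :: "real set" assume A: "A \<in> sets borel"
      have "(\<lambda>\<omega>. g (Y \<omega>)) -` A \<inter> space M = Y -` (g -` A \<inter> space ?P) \<inter> space M"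
        using measurable_space[OF Ymeas] by auto
      moreover have "g -` A \<inter> space ?P \<in> sets ?P" using measurable_sets[OF gm A] .
      ultimately show "\<exists>A'. (\<lambda>\<omega>. g (Y \<omega>)) -` A \<inter> space M = Y -` A' \<inter> space M \<and> A' \<in> sets ?P" by blast
    qed
    then have "sigma_sets (space M) {(\<lambda>\<omega>. g (Y \<omega>)) -` A \<inter> space M | A. A \<in> sets borel}
        \<subseteq> sigma_sets (space M) {Y -` A \<inter> space M | A. A \<in> sets ?P}"
      by (rule sigma_sets_subseteq)
    then show ?thesis unfolding sigG .
  qed
  have "indep_set (sigma_sets (space M) ZG) (sigma_sets (space M) {(\<lambda>\<omega>. g (Y \<omega>)) -` A \<inter> space M | A. A \<in> sets borel})"
    using big sub unfolding indep_sets2_eq by blast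
  then show ?thesis
    unfolding indep_var_eq ZG_def using Zm gY by auto
qed

definition relf :: "real \<Rightarrow> real \<Rightarrow> real \<Rightarrow> real \<Rightarrow> (real \<Rightarrow> real) \<Rightarrow> real \<Rightarrow> real" where
  "relf a b c d f t = (if t \<in> {a..b} then f t - f b else if t \<in> {c..d} then f t - f c else 0)"

lemma relf_relpath: "relf a b c d (\<lambda>s. B s \<omega>) t = relpath B a b c d \<omega> t"
  unfolding relf_def relpath_def by simp

definition Ytot :: "nat \<Rightarrow> nat \<Rightarrow> (nat \<Rightarrow> real \<Rightarrow> 'a \<Rightarrow> real) \<Rightarrow> real \<Rightarrow> real \<Rightarrow> real \<Rightarrow> real \<Rightarrow> 'a \<Rightarrow> nat \<times> real \<Rightarrow> real" where
  "Ytot L x W a b c d \<omega> = (\<lambda>(y, t). if y = x then relpath (W x) a b c d \<omega> t else if y \<in> {1..L-1} then W y t \<omega> else 0)"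

lemma (in prob_space) tot_fd:
  assumes x: "x \<in> {1..L-1}"
    and BM: "\<And>y. y \<in> {1..L-1} \<Longrightarrow> two_sided_BM M (W y)"
    and indep: "indep_vars (\<lambda>_. PiM UNIV (\<lambda>_. borel)) (\<lambda>y \<omega>. \<lambda>t. W y t \<omega>) {1..L-1}"
    and abcd: "a \<le> b" "b < c" "c \<le> d"
    and J: "finite J" and S: "S \<in> sets borel" and E: "\<And>i. i \<in> J \<Longrightarrow> E i \<in> sets borel"
  shows "prob {\<omega>\<in>space M. W x c \<omega> - W x b \<omega> \<in> S \<and> (\<forall>i\<in>J. Ytot L x W a b c d \<omega> i \<in> E i)} =
         prob {\<omega>\<in>space M. W x c \<omega> - W x b \<omega> \<in> S} * prob {\<omega>\<in>space M. \<forall>i\<in>J. Ytot L x W a b c d \<omega> i \<in> E i}"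
proof -
  let ?P1 = "\<lambda>_::nat. PiM (UNIV::real set) (\<lambda>_. borel::real measure)"
  define S' where "S' = {1..L-1} - {x}"
  define Kf where "Kf = case_bool {x} S'"
  have i0: "indep_vars (\<lambda>j. PiM (Kf j) ?P1) (\<lambda>j \<omega>. restrict (\<lambda>y. \<lambda>t. W y t \<omega>) (Kf j)) UNIV"
    by (rule indep_vars_restrict[OF indep]) (use x in \<open>auto simp: Kf_def S'_def disjoint_family_on_def split: bool.split\<close>)
  have e1: "(\<lambda>j. PiM (Kf j) ?P1) = case_bool (PiM {x} ?P1) (PiM S' ?P1)"
    by (auto simp: fun_eq_iff Kf_def split: bool.split)
  have e2: "(\<lambda>j \<omega>. restrict (\<lambda>y. \<lambda>t. W y t \<omega>) (Kf j)) = case_bool (\<lambda>\<omega>. restrict (\<lambda>y. \<lambda>t. W y t \<omega>) {x}) (\<lambda>\<omega>. restrict (\<lambda>y. \<lambda>t. W y t \<omega>) S')"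
    by (auto simp: fun_eq_iff Kf_def split: bool.split)
  have ind: "indep_var (PiM {x} ?P1) (\<lambda>\<omega>. restrict (\<lambda>y. \<lambda>t. W y t \<omega>) {x}) (PiM S' ?P1) (\<lambda>\<omega>. restrict (\<lambda>y. \<lambda>t. W y t \<omega>) S')"
    unfolding indep_var_def using i0 unfolding e1 e2 .
  define U where "U \<omega> = restrict (\<lambda>y. \<lambda>t. W y t \<omega>) {x}" for \<omega>
  define R where "R \<omega> = restrict (\<lambda>y. \<lambda>t. W y t \<omega>) S'" for \<omega>
  define J1 where "J1 = snd ` (J \<inter> {i. fst i = x})"
  define J2 where "J2 = {i\<in>J. fst i \<noteq> x}"
  have fJ1: "finite J1" using J unfolding J1_def by simp
  have fJ2: "finite J2" using J unfolding J2_def by simp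
  have EJ1: "E (x, t) \<in> sets borel" if "t \<in> J1" for t using that E unfolding J1_def by auto
  have EJ2: "E i \<in> sets borel" if "i \<in> J2" for i using that E unfolding J2_def by auto
  define X1 where "X1 = {u\<in>space (PiM {x} ?P1). u x c - u x b \<in> S \<and> (\<forall>t\<in>J1. relf a b c d (u x) t \<in> E (x, t))}"
  define X1' where "X1' = {u\<in>space (PiM {x} ?P1). \<forall>t\<in>J1. relf a b c d (u x) t \<in> E (x, t)}"
  define X2 where "X2 = {r\<in>space (PiM S' ?P1). \<forall>i\<in>J2. (if fst i \<in> S' then r (fst i) (snd i) else 0) \<in> E i}"
  have cm: "(\<lambda>u::nat\<Rightarrow>real\<Rightarrow>real. u y t) \<in> borel_measurable (PiM K ?P1)" if "y \<in> K" for y t K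
    using measurable_compose[OF measurable_component_singleton[of y K ?P1] measurable_component_singleton[of t UNIV "\<lambda>_. borel"]] that by simp
  have rm: "(\<lambda>u. relf a b c d (u x) t) \<in> borel_measurable (PiM {x} ?P1)" for t
  proof -
    have "(\<lambda>u. relf a b c d (u x) t) = (\<lambda>u. u x t - u x b) \<or> (\<lambda>u. relf a b c d (u x) t) = (\<lambda>u. u x t - u x c) \<or>
          (\<lambda>u. relf a b c d (u x) t) = (\<lambda>u. 0)"
      unfolding relf_def by (cases "t \<in> {a..b}"; cases "t \<in> {c..d}") (simp_all only: if_True if_False simp_thms)
    then show ?thesis using cm[of x "{x}"] by (auto intro!: borel_measurable_diff)
  qed
  have zm: "(\<lambda>u. u x c - u x b) \<in> borel_measurable (PiM {x} ?P1)"
    using cm[of x "{x}"] by (auto intro!: borel_measurable_diff)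
  have om: "(\<lambda>r. if fst i \<in> S' then r (fst i) (snd i) else 0) \<in> borel_measurable (PiM S' ?P1)" for i
    using cm[of "fst i" S' "snd i"] by (cases "fst i \<in> S'") auto
  have X1's: "X1' \<in> sets (PiM {x} ?P1)"
    unfolding X1'_def
  proof (rule sets.sets_Collect_finite_All[OF _ fJ1])
    fix t assume "t \<in> J1"
    have "{u \<in> space (PiM {x} ?P1). relf a b c d (u x) t \<in> E (x, t)} = (\<lambda>u. relf a b c d (u x) t) -` E (x, t) \<inter> space (PiM {x} ?P1)" by auto
    also have "\<dots> \<in> sets (PiM {x} ?P1)" by (rule measurable_sets[OF rm EJ1[OF \<open>t \<in> J1\<close>]])
    finally show "{u \<in> space (PiM {x} ?P1). relf a b c d (u x) t \<in> E (x, t)} \<in> sets (PiM {x} ?P1)" .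
  qed
  have X1s: "X1 \<in> sets (PiM {x} ?P1)"
  proof -
    have "X1 = ((\<lambda>u. u x c - u x b) -` S \<inter> space (PiM {x} ?P1)) \<inter> X1'" unfolding X1_def X1'_def by auto
    also have "\<dots> \<in> sets (PiM {x} ?P1)" using measurable_sets[OF zm S] X1's by auto
    finally show ?thesis .
  qed
  have X2s: "X2 \<in> sets (PiM S' ?P1)"
    unfolding X2_def
  proof (rule sets.sets_Collect_finite_All[OF _ fJ2])
    fix i assume "i \<in> J2"
    have "{r \<in> space (PiM S' ?P1). (if fst i \<in> S' then r (fst i) (snd i) else 0) \<in> E i} =
       (\<lambda>r. if fst i \<in> S' then r (fst i) (snd i) else 0) -` E i \<inter> space (PiM S' ?P1)" by auto
    also have "\<dots> \<in> sets (PiM S' ?P1)" by (rule measurable_sets[OF om EJ2[OF \<open>i \<in> J2\<close>]])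
    finally show "{r \<in> space (PiM S' ?P1). (if fst i \<in> S' then r (fst i) (snd i) else 0) \<in> E i} \<in> sets (PiM S' ?P1)" .
  qed
  have Uspace: "U \<omega> \<in> space (PiM {x} ?P1)" for \<omega> unfolding U_def by (simp add: space_PiM)
  have Rspace: "R \<omega> \<in> space (PiM S' ?P1)" for \<omega> unfolding R_def by (simp add: space_PiM)
  have Yx: "Ytot L x W a b c d \<omega> (x, t) = relf a b c d (U \<omega> x) t" for \<omega> t
    unfolding Ytot_def U_def by (simp add: relf_relpath)
  have Yo: "Ytot L x W a b c d \<omega> i = (if fst i \<in> S' then R \<omega> (fst i) (snd i) else 0)" if "fst i \<noteq> x" for \<omega> i
    using that unfolding Ytot_def R_def S'_def by (auto split: prod.split)
  have allJ: "(\<forall>i\<in>J. Ytot L x W a b c d \<omega> i \<in> E i) \<longleftrightarrow>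
      (\<forall>t\<in>J1. relf a b c d (U \<omega> x) t \<in> E (x, t)) \<and> (\<forall>i\<in>J2. (if fst i \<in> S' then R \<omega> (fst i) (snd i) else 0) \<in> E i)" for \<omega>
  proof -
    have split: "(\<forall>i\<in>J. Q i) \<longleftrightarrow> (\<forall>t\<in>J1. Q (x, t)) \<and> (\<forall>i\<in>J2. Q i)" for Q :: "nat \<times> real \<Rightarrow> bool"
    proof
      assume H: "\<forall>i\<in>J. Q i"
      have "Q (x, t)" if "t \<in> J1" for t
      proof -
        from that obtain i where "i \<in> J" "fst i = x" "t = snd i" unfolding J1_def by auto
        then have "(x, t) = i" by (cases i) auto
        with H \<open>i \<in> J\<close> show ?thesis by simp
      qed
      moreover have "\<forall>i\<in>J2. Q i" using H unfolding J2_def by simp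
      ultimately show "(\<forall>t\<in>J1. Q (x, t)) \<and> (\<forall>i\<in>J2. Q i)" by simp
    next
      assume H: "(\<forall>t\<in>J1. Q (x, t)) \<and> (\<forall>i\<in>J2. Q i)"
      show "\<forall>i\<in>J. Q i"
      proof
        fix i assume i: "i \<in> J"
        show "Q i"
        proof (cases "fst i = x")
          case True
          then have "snd i \<in> J1" "i = (x, snd i)" using i unfolding J1_def by (auto intro: prod_eqI)
          then show ?thesis using H by metis
        next
          case False
          then have "i \<in> J2" using i unfolding J2_def by simp
          then show ?thesis using H by simp
        qed
      qed
    qed
    show ?thesis unfolding split[of "\<lambda>i. Ytot L x W a b c d \<omega> i \<in> E i"] Yx
      using Yo unfolding J2_def by auto
  qed
  have Ux: "U \<omega> x c - U \<omega> x b = W x c \<omega> - W x b \<omega>" for \<omega> unfolding U_def by simp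
  have ev1: "{\<omega>\<in>space M. W x c \<omega> - W x b \<omega> \<in> S \<and> (\<forall>i\<in>J. Ytot L x W a b c d \<omega> i \<in> E i)} =
      (\<lambda>\<omega>. (U \<omega>, R \<omega>)) -` (X1 \<times> X2) \<inter> space M"
    unfolding X1_def X2_def using allJ Ux Uspace Rspace by auto
  have ev2: "{\<omega>\<in>space M. \<forall>i\<in>J. Ytot L x W a b c d \<omega> i \<in> E i} = (\<lambda>\<omega>. (U \<omega>, R \<omega>)) -` (X1' \<times> X2) \<inter> space M"
    unfolding X1'_def X2_def using allJ Uspace Rspace by auto
  have ev3: "U -` X1 \<inter> space M = {\<omega>\<in>space M. W x c \<omega> - W x b \<omega> \<in> S \<and> (\<forall>t\<in>J1. relpath (W x) a b c d \<omega> t \<in> E (x, t))}"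
    unfolding X1_def using Ux Uspace by (auto simp: U_def relf_relpath)
  have ev4: "U -` X1' \<inter> space M = {\<omega>\<in>space M. \<forall>t\<in>J1. relpath (W x) a b c d \<omega> t \<in> E (x, t)}"
    unfolding X1'_def using Uspace by (auto simp: U_def relf_relpath)
  have ev5: "{\<omega>\<in>space M. W x c \<omega> - W x b \<omega> \<in> S} = {\<omega>\<in>space M. W x c \<omega> - W x b \<omega> \<in> S}" ..
  have sfd: "prob {\<omega>\<in>space M. W x c \<omega> - W x b \<omega> \<in> S \<and> (\<forall>t\<in>J1. relpath (W x) a b c d \<omega> t \<in> E (x, t))} =
      prob {\<omega>\<in>space M. W x c \<omega> - W x b \<omega> \<in> S} * prob {\<omega>\<in>space M. \<forall>t\<in>J1. relpath (W x) a b c d \<omega> t \<in> E (x, t)}"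
    by (rule site_fd[OF BM[OF x] abcd fJ1 S EJ1])
  have "prob ((\<lambda>\<omega>. (U \<omega>, R \<omega>)) -` (X1 \<times> X2) \<inter> space M) = prob (U -` X1 \<inter> space M) * prob (R -` X2 \<inter> space M)"
    using indep_varD[OF ind X1s X2s] unfolding U_def R_def .
  moreover have "prob ((\<lambda>\<omega>. (U \<omega>, R \<omega>)) -` (X1' \<times> X2) \<inter> space M) = prob (U -` X1' \<inter> space M) * prob (R -` X2 \<inter> space M)"
    using indep_varD[OF ind X1's X2s] unfolding U_def R_def .
  ultimately show ?thesis
    unfolding ev1 ev2 using sfd unfolding ev3[symmetric] ev4[symmetric] by simp
qed

lemma (in prob_space) indep_atomless:
  fixes Z G :: "'a \<Rightarrow> real"
  assumes ind: "indep_var borel Z borel G" and Zd: "distributed M lborel Z f"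
  shows "prob {\<omega>\<in>space M. G \<omega> = - Z \<omega>} = 0"
proof -
  have rZ[measurable]: "Z \<in> borel_measurable M" using indep_var_rv1[OF ind] .
  have rG[measurable]: "G \<in> borel_measurable M" using indep_var_rv2[OF ind] .
  let ?PZ = "distr M borel Z" and ?PG = "distr M borel G"
  interpret PZ: prob_space ?PZ by (rule prob_space_distr) simp
  interpret PG: prob_space ?PG by (rule prob_space_distr) simp
  interpret P: pair_sigma_finite ?PZ ?PG ..
  have eq: "?PZ \<Otimes>\<^sub>M ?PG = distr M (borel \<Otimes>\<^sub>M borel) (\<lambda>\<omega>. (Z \<omega>, G \<omega>))"
    using ind unfolding indep_var_distribution_eq by simp
  define A where "A = {p \<in> space (borel \<Otimes>\<^sub>M borel). snd p = - (fst p :: real)}"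
  have As: "A \<in> sets (borel \<Otimes>\<^sub>M borel)" unfolding A_def by measurable
  have "sets (?PZ \<Otimes>\<^sub>M ?PG) = sets (borel \<Otimes>\<^sub>M borel)"
    by (rule sets_pair_measure_cong) simp_all
  then have As': "A \<in> sets (?PZ \<Otimes>\<^sub>M ?PG)" using As by simp
  have single: "emeasure ?PZ {p} = 0" for p
  proof -
    have "emeasure ?PZ {p} = emeasure M (Z -` {p} \<inter> space M)" by (simp add: emeasure_distr)
    also have "\<dots> = (\<integral>\<^sup>+x. f x * indicator {p} x \<partial>lborel)"
      by (rule distributed_emeasure[OF Zd]) simp
    also have "\<dots> = (\<integral>\<^sup>+(x::real). 0 \<partial>lborel)"
      by (rule nn_integral_cong_AE) (use AE_lborel_singleton[of p] in \<open>auto elim!: AE_mp\<close>)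
    finally show ?thesis by simp
  qed
  have "emeasure M {\<omega>\<in>space M. G \<omega> = - Z \<omega>} = emeasure M ((\<lambda>\<omega>. (Z \<omega>, G \<omega>)) -` A \<inter> space M)"
    unfolding A_def by (intro arg_cong[where f="emeasure M"]) (auto simp: space_pair_measure)
  also have "\<dots> = emeasure (distr M (borel \<Otimes>\<^sub>M borel) (\<lambda>\<omega>. (Z \<omega>, G \<omega>))) A"
    by (rule emeasure_distr[symmetric]) (simp_all add: As)
  also have "\<dots> = emeasure (?PZ \<Otimes>\<^sub>M ?PG) A" unfolding eq ..
  also have "\<dots> = (\<integral>\<^sup>+y. emeasure ?PZ ((\<lambda>x. (x, y)) -` A) \<partial>?PG)"
    by (rule P.emeasure_pair_measure_alt2[OF As'])
  also have "\<dots> = (\<integral>\<^sup>+y. 0 \<partial>?PG)"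
  proof (rule nn_integral_cong)
    fix y
    have "(\<lambda>x. (x, y)) -` A = {- y}" unfolding A_def by (auto simp: space_pair_measure)
    then show "emeasure ?PZ ((\<lambda>x. (x, y)) -` A) = 0" using single by simp
  qed
  finally have "emeasure M {\<omega>\<in>space M. G \<omega> = - Z \<omega>} = 0" by simp
  then show ?thesis by (simp add: emeasure_eq_measure)
qed



definition Phi :: "nat \<Rightarrow> nat \<Rightarrow> real set \<Rightarrow> (nat \<times> real \<Rightarrow> real) \<Rightarrow> ereal" where
  "Phi L x I v = (INF qs\<in>Qset L x I. ereal (Dir L (cfg L qs) - (\<Sum>y\<in>{1..L-1}-{x}. v (y, cfg L qs y)) - v (x, cfg L qs x)))"

lemma Phi_meas: "Phi L x I \<in> borel_measurable (PiM UNIV (\<lambda>_::nat\<times>real. borel::real measure))"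
  unfolding Phi_def
proof (rule borel_measurable_INF)
  show "countable (Qset L x I)" by (rule countableI_type)
  fix qs
  show "(\<lambda>v::nat\<times>real\<Rightarrow>real. ereal (Dir L (cfg L qs) - (\<Sum>y\<in>{1..L-1}-{x}. v (y, cfg L qs y)) - v (x, cfg L qs x)))
      \<in> borel_measurable (PiM UNIV (\<lambda>_. borel))"
    by measurable
qed

lemma Wpot_split:
  assumes "x \<in> {1..L-1}"
  shows "Wpot L W \<omega> h = W x (h x) \<omega> + (\<Sum>y\<in>{1..L-1}-{x}. W y (h y) \<omega>)"
  unfolding Wpot_def using assms by (subst sum.remove[of _ x]) auto

lemma Phi_Ytot_ab:
  assumes x: "x \<in> {1..L-1}"
  shows "Phi L x {a..b} (Ytot L x W a b c d \<omega>) = (INF qs\<in>Qset L x {a..b}. ereal (energy L W \<omega> (cfg L qs) + W x b \<omega>))"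
  unfolding Phi_def
proof (rule INF_cong[OF refl])
  fix qs assume "qs \<in> Qset L x {a..b}"
  then have cx: "cfg L qs x \<in> {a..b}" unfolding Qset_def cfg_def using x by auto
  have s: "(\<Sum>y\<in>{1..L-1}-{x}. Ytot L x W a b c d \<omega> (y, cfg L qs y)) = (\<Sum>y\<in>{1..L-1}-{x}. W y (cfg L qs y) \<omega>)"
    by (rule sum.cong) (auto simp: Ytot_def)
  have t: "Ytot L x W a b c d \<omega> (x, cfg L qs x) = W x (cfg L qs x) \<omega> - W x b \<omega>"
    using cx by (simp add: Ytot_def relpath_def)
  show "ereal (Dir L (cfg L qs) - (\<Sum>y\<in>{1..L-1}-{x}. Ytot L x W a b c d \<omega> (y, cfg L qs y)) - Ytot L x W a b c d \<omega> (x, cfg L qs x))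
      = ereal (energy L W \<omega> (cfg L qs) + W x b \<omega>)"
    unfolding s t energy_def Wpot_split[OF x] by simp
qed

lemma Phi_Ytot_cd:
  assumes x: "x \<in> {1..L-1}" and bc: "b < c"
  shows "Phi L x {c..d} (Ytot L x W a b c d \<omega>) = (INF qs\<in>Qset L x {c..d}. ereal (energy L W \<omega> (cfg L qs) + W x c \<omega>))"
  unfolding Phi_def
proof (rule INF_cong[OF refl])
  fix qs assume "qs \<in> Qset L x {c..d}"
  then have cx: "cfg L qs x \<in> {c..d}" unfolding Qset_def cfg_def using x by auto
  then have cx': "cfg L qs x \<notin> {a..b}" using bc by auto
  have s: "(\<Sum>y\<in>{1..L-1}-{x}. Ytot L x W a b c d \<omega> (y, cfg L qs y)) = (\<Sum>y\<in>{1..L-1}-{x}. W y (cfg L qs y) \<omega>)"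
    by (rule sum.cong) (auto simp: Ytot_def)
  have t: "Ytot L x W a b c d \<omega> (x, cfg L qs x) = W x (cfg L qs x) \<omega> - W x c \<omega>"
    using cx cx' by (auto simp: Ytot_def relpath_def)
  show "ereal (Dir L (cfg L qs) - (\<Sum>y\<in>{1..L-1}-{x}. Ytot L x W a b c d \<omega> (y, cfg L qs y)) - Ytot L x W a b c d \<omega> (x, cfg L qs x))
      = ereal (energy L W \<omega> (cfg L qs) + W x c \<omega>)"
    unfolding s t energy_def Wpot_split[OF x] by simp
qed

definition Greal :: "nat \<Rightarrow> nat \<Rightarrow> real \<Rightarrow> real \<Rightarrow> real \<Rightarrow> real \<Rightarrow> (nat \<times> real \<Rightarrow> real) \<Rightarrow> real" where
  "Greal L x a b c d v = real_of_ereal (Phi L x {a..b} v) - real_of_ereal (Phi L x {c..d} v)"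

lemma Greal_meas: "Greal L x a b c d \<in> borel_measurable (PiM UNIV (\<lambda>_::nat\<times>real. borel::real measure))"
  unfolding Greal_def using Phi_meas[of L x] by measurable

lemma (in prob_space) null_event:
  assumes x: "x \<in> {1..L-1}"
    and BM: "\<And>y. y \<in> {1..L-1} \<Longrightarrow> two_sided_BM M (W y)"
    and indep: "indep_vars (\<lambda>_. PiM UNIV (\<lambda>_. borel)) (\<lambda>y \<omega>. \<lambda>t. W y t \<omega>) {1..L-1}"
    and abcd: "a \<le> b" "b < c" "c \<le> d"
  shows "prob {\<omega>\<in>space M. Greal L x a b c d (Ytot L x W a b c d \<omega>) = - (W x c \<omega> - W x b \<omega>)} = 0"
proof -
  have Wm: "W y t \<in> borel_measurable M" if "y \<in> {1..L-1}" for y t using BM_meas[OF BM[OF that]] .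
  have Zm: "(\<lambda>\<omega>. W x c \<omega> - W x b \<omega>) \<in> borel_measurable M" using Wm[OF x] by measurable
  have Ym: "(\<lambda>\<omega>. Ytot L x W a b c d \<omega> i) \<in> borel_measurable M" for i
  proof (cases i)
    case (Pair y t)
    show ?thesis
    proof (cases "y = x")
      case True
      have "(\<lambda>\<omega>. relpath (W x) a b c d \<omega> t) \<in> borel_measurable M"
        unfolding relpath_def using Wm[OF x] by (cases "t \<in> {a..b}"; cases "t \<in> {c..d}") auto
      then show ?thesis using Pair True by (simp add: Ytot_def)
    next
      case False
      then show ?thesis using Pair Wm by (cases "y \<in> {1..L-1}") (auto simp: Ytot_def)
    qed
  qed
  have ind: "indep_var borel (\<lambda>\<omega>. W x c \<omega> - W x b \<omega>) borel (\<lambda>\<omega>. Greal L x a b c d (Ytot L x W a b c d \<omega>))"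
    by (rule indep_var_cyl[OF Zm Ym tot_fd[OF x BM indep abcd] Greal_meas])
  show ?thesis
    by (rule indep_atomless[OF ind BM_incr_distr[OF BM[OF x] abcd(2)]])
qed



lemma (in prob_space) null_event_AE:
  assumes x: "x \<in> {1..L-1}"
    and BM: "\<And>y. y \<in> {1..L-1} \<Longrightarrow> two_sided_BM M (W y)"
    and indep: "indep_vars (\<lambda>_. PiM UNIV (\<lambda>_. borel)) (\<lambda>y \<omega>. \<lambda>t. W y t \<omega>) {1..L-1}"
    and abcd: "a \<le> b" "b < c" "c \<le> d"
  shows "AE \<omega> in M. Greal L x a b c d (Ytot L x W a b c d \<omega>) \<noteq> - (W x c \<omega> - W x b \<omega>)"
proof -
  have Wm: "W y t \<in> borel_measurable M" if "y \<in> {1..L-1}" for y t using BM_meas[OF BM[OF that]] .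
  have Ym: "(\<lambda>\<omega>. Ytot L x W a b c d \<omega> i) \<in> borel_measurable M" for i
  proof (cases i)
    case (Pair y t)
    show ?thesis
    proof (cases "y = x")
      case True
      have "(\<lambda>\<omega>. relpath (W x) a b c d \<omega> t) \<in> borel_measurable M"
        unfolding relpath_def using Wm[OF x] by (cases "t \<in> {a..b}"; cases "t \<in> {c..d}") auto
      then show ?thesis using Pair True by (simp add: Ytot_def)
    next
      case False
      then show ?thesis using Pair Wm by (cases "y \<in> {1..L-1}") (auto simp: Ytot_def)
    qed
  qed
  have Ymeas: "(\<lambda>\<omega>. Ytot L x W a b c d \<omega>) \<in> measurable M (PiM UNIV (\<lambda>_. borel))"
    using measurable_PiM_single'[of UNIV "\<lambda>i \<omega>. Ytot L x W a b c d \<omega> i" M "\<lambda>_. borel"] Ym by auto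
  have Gm: "(\<lambda>\<omega>. Greal L x a b c d (Ytot L x W a b c d \<omega>)) \<in> borel_measurable M"
    using measurable_comp[OF Ymeas Greal_meas] by (simp add: comp_def)
  have Zm: "(\<lambda>\<omega>. W x c \<omega> - W x b \<omega>) \<in> borel_measurable M" using Wm[OF x] by measurable
  define N where "N = {\<omega>\<in>space M. Greal L x a b c d (Ytot L x W a b c d \<omega>) = - (W x c \<omega> - W x b \<omega>)}"
  have Ns: "N \<in> events" unfolding N_def using Gm Zm by measurable
  have "prob N = 0" unfolding N_def by (rule null_event[OF x BM indep abcd])
  then have "emeasure M N = 0" using Ns by (simp add: emeasure_eq_measure)
  then show ?thesis by (subst AE_iff_measurable[OF Ns]) (auto simp: N_def)
qed

lemma rat_between:
  fixes u v :: real assumes "u < v"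
  obtains q :: rat where "u < of_rat q" "of_rat q < v"
proof -
  obtain r where "r \<in> \<rat>" "u < r" "r < v" using Rats_dense_in_real[OF assms] by blast
  then show ?thesis using that by (auto elim: Rats_cases)
qed

lemma unique_min:
  assumes L: "L \<ge> 2"
    and cont: "\<And>y. y \<in> {1..L-1} \<Longrightarrow> continuous_on UNIV (\<lambda>t. W y t \<omega>)"
    and H: "\<And>x a b c d. x \<in> {1..L-1} \<Longrightarrow> a < b \<Longrightarrow> b < c \<Longrightarrow> c < d \<Longrightarrow>
       Greal L x (of_rat a) (of_rat b) (of_rat c) (of_rat d) (Ytot L x W (of_rat a) (of_rat b) (of_rat c) (of_rat d) \<omega>)
         \<noteq> - (W x (of_rat c) \<omega> - W x (of_rat b) \<omega>)"
    and h1: "h1 \<in> configs L" "\<And>g. g \<in> configs L \<Longrightarrow> energy L W \<omega> h1 \<le> energy L W \<omega> g"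
    and h2: "h2 \<in> configs L" "\<And>g. g \<in> configs L \<Longrightarrow> energy L W \<omega> h2 \<le> energy L W \<omega> g"
  shows "h1 = h2"
proof (rule ccontr)
  assume "h1 \<noteq> h2"
  then obtain x where hx: "h1 x \<noteq> h2 x" by auto
  have x: "x \<in> {1..L-1}"
  proof (rule ccontr)
    assume "x \<notin> {1..L-1}"
    then have "x = 0 \<or> x = L \<or> x > L" by auto
    then show False using h1(1) h2(1) hx unfolding configs_def by auto
  qed
  have key: False if hu: "hu \<in> configs L" "\<And>g. g \<in> configs L \<Longrightarrow> energy L W \<omega> hu \<le> energy L W \<omega> g"
    and hv: "hv \<in> configs L" "\<And>g. g \<in> configs L \<Longrightarrow> energy L W \<omega> hv \<le> energy L W \<omega> g"
    and uv: "hu x < hv x" for hu hv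
  proof -
    define u where "u = hu x"
    define v where "v = hv x"
    have uv': "u < v" using uv unfolding u_def v_def .
    obtain a where a: "u - 1 < of_rat a" "of_rat a < u" using rat_between[of "u - 1" u] by auto
    obtain b where b: "u < of_rat b" "of_rat b < u + (v - u) / 3" using rat_between[of u "u + (v - u) / 3"] uv' by auto
    obtain c where c: "v - (v - u) / 3 < of_rat c" "of_rat c < v" using rat_between[of "v - (v - u) / 3" v] uv' by auto
    obtain d where d: "v < of_rat d" "of_rat d < v + 1" using rat_between[of v "v + 1"] by auto
    define ra where "ra = (of_rat a :: real)"
    define rb where "rb = (of_rat b :: real)"
    define rc where "rc = (of_rat c :: real)"
    define rd where "rd = (of_rat d :: real)"
    have ab: "a < b" using a b by (metis of_rat_less order.strict_trans)
    have "u + (v - u)/3 < v - (v-u)/3" using uv' by (simp add: field_simps)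
    then have "real_of_rat b < real_of_rat c" using b c by linarith
    then have bc: "b < c" by (simp add: of_rat_less)
    have cd: "c < d" using c d by (metis of_rat_less order.strict_trans)
    have rab: "ra < rb" "rb < rc" "rc < rd" using ab bc cd unfolding ra_def rb_def rc_def rd_def by (simp_all add: of_rat_less)
    have eq: "energy L W \<omega> hu = energy L W \<omega> hv" using hu(2)[OF hv(1)] hv(2)[OF hu(1)] by simp
    have P1: "Phi L x {ra..rb} (Ytot L x W ra rb rc rd \<omega>) = ereal (energy L W \<omega> hu + W x rb \<omega>)"
      unfolding Phi_Ytot_ab[OF x]
      by (rule squeeze[OF L x rab(1) hu(1) _ cont hu(2)]) (use a b in \<open>auto simp: u_def ra_def rb_def\<close>)
    have P2: "Phi L x {rc..rd} (Ytot L x W ra rb rc rd \<omega>) = ereal (energy L W \<omega> hv + W x rc \<omega>)"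
      unfolding Phi_Ytot_cd[OF x rab(2)]
      by (rule squeeze[OF L x rab(3) hv(1) _ cont hv(2)]) (use c d in \<open>auto simp: v_def rc_def rd_def\<close>)
    have "Greal L x ra rb rc rd (Ytot L x W ra rb rc rd \<omega>) = - (W x rc \<omega> - W x rb \<omega>)"
      unfolding Greal_def P1 P2 using eq by simp
    then show False using H[OF x ab bc cd] unfolding ra_def rb_def rc_def rd_def by simp
  qed
  show False
  proof (cases "h1 x < h2 x")
    case True then show False using key[of h1 h2] h1 h2 by blast
  next
    case False then have "h2 x < h1 x" using hx by simp
    then show False using key[of h2 h1] h1 h2 by blast
  qed
qed

lemma lin_to_quad:
  fixes f :: "real \<Rightarrow> real"
  assumes e: "0 < e" and lin: "\<And>u. \<bar>f u\<bar> \<le> A * \<bar>u\<bar> + C"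
  shows "\<exists>B. \<forall>u. f u \<le> e * u\<^sup>2 + B"
proof (intro exI allI)
  fix u
  have "0 \<le> e * (\<bar>u\<bar> - A / (2 * e))\<^sup>2" using e by simp
  also have "e * (\<bar>u\<bar> - A / (2 * e))\<^sup>2 = e * u\<^sup>2 - A * \<bar>u\<bar> + A\<^sup>2 / (4 * e)"
    using e by (simp add: power2_eq_square field_simps)
  finally have "A * \<bar>u\<bar> \<le> e * u\<^sup>2 + A\<^sup>2 / (4 * e)" by simp
  then show "f u \<le> e * u\<^sup>2 + (C + A\<^sup>2 / (4 * e))" using lin[of u] by simp
qed

theorem lemma1:
  fixes M :: "'a measure" and W :: "nat \<Rightarrow> real \<Rightarrow> 'a \<Rightarrow> real" and L :: nat
  assumes "prob_space M"
    and "L \<ge> 2"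
    and "\<And>x. x \<in> {1..L-1} \<Longrightarrow> two_sided_BM M (W x)"
    and "prob_space.indep_vars M (\<lambda>_. Pi\<^sub>M UNIV (\<lambda>_. borel))
           (\<lambda>x \<omega>. \<lambda>t. W x t \<omega>) {1..L-1}"
  shows "AE \<omega> in M. \<exists>!h. h \<in> configs L \<and>
           (\<forall>g \<in> configs L. energy L W \<omega> h \<le> energy L W \<omega> g)"
proof -
  interpret prob_space M by (rule assms(1))
  note L = assms(2) and BM = assms(3) and indep = assms(4)
  have AE1: "AE \<omega> in M. \<forall>y\<in>{1..L-1}. \<exists>A C. \<forall>u. \<bar>W y u \<omega>\<bar> \<le> A * \<bar>u\<bar> + C"
    by (subst AE_ball_countable) (auto intro: BM_growth[OF BM])
  have AE2: "AE \<omega> in M. \<forall>p::nat\<times>rat\<times>rat\<times>rat\<times>rat. case p of (x, a, b, c, d) \<Rightarrow>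
      (x \<in> {1..L-1} \<and> a < b \<and> b < c \<and> c < d \<longrightarrow>
       Greal L x (of_rat a) (of_rat b) (of_rat c) (of_rat d) (Ytot L x W (of_rat a) (of_rat b) (of_rat c) (of_rat d) \<omega>)
         \<noteq> - (W x (of_rat c) \<omega> - W x (of_rat b) \<omega>))"
  proof (subst AE_all_countable, intro allI)
    fix p :: "nat\<times>rat\<times>rat\<times>rat\<times>rat"
    obtain x a b c d where p: "p = (x, a, b, c, d)" by (cases p) auto
    show "AE \<omega> in M. case p of (x, a, b, c, d) \<Rightarrow>
      (x \<in> {1..L-1} \<and> a < b \<and> b < c \<and> c < d \<longrightarrow>
       Greal L x (of_rat a) (of_rat b) (of_rat c) (of_rat d) (Ytot L x W (of_rat a) (of_rat b) (of_rat c) (of_rat d) \<omega>)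
         \<noteq> - (W x (of_rat c) \<omega> - W x (of_rat b) \<omega>))"
    proof (cases "x \<in> {1..L-1} \<and> a < b \<and> b < c \<and> c < d")
      case True
      then have "AE \<omega> in M. Greal L x (of_rat a) (of_rat b) (of_rat c) (of_rat d) (Ytot L x W (of_rat a) (of_rat b) (of_rat c) (of_rat d) \<omega>)
         \<noteq> - (W x (of_rat c) \<omega> - W x (of_rat b) \<omega>)"
        by (intro null_event_AE[OF _ BM indep]) (auto simp: of_rat_less_eq of_rat_less less_imp_le)
      then show ?thesis unfolding p by simp
    next
      case False then show ?thesis by (intro AE_I2) (auto simp: p)
    qed
  qed
  show ?thesis
    using AE1 AE2 AE_space
  proof (eventually_elim)
    case (elim \<omega>)
    note G = elim(1) and N = elim(2) and \<omega> = elim(3)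
    have cont: "continuous_on UNIV (\<lambda>t. W y t \<omega>)" if "y \<in> {1..L-1}" for y
      using BM[OF that] \<omega> unfolding two_sided_BM_def by blast
    have zero: "W y 0 \<omega> = 0" if "y \<in> {1..L-1}" for y
      using BM[OF that] \<omega> unfolding two_sided_BM_def by blast
    have e: "0 < 1 / (4 * (real L)\<^sup>2)" using L by simp
    have "\<forall>y\<in>{1..L-1}. \<exists>B. \<forall>t. W y t \<omega> \<le> 1 / (4 * (real L)\<^sup>2) * t\<^sup>2 + B"
    proof
      fix y assume y: "y \<in> {1..L-1}"
      then obtain A C where "\<forall>u. \<bar>W y u \<omega>\<bar> \<le> A * \<bar>u\<bar> + C" using G by blast
      then show "\<exists>B. \<forall>t. W y t \<omega> \<le> 1 / (4 * (real L)\<^sup>2) * t\<^sup>2 + B"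
        by (intro lin_to_quad[OF e]) blast
    qed
    then obtain Bf where Bf: "\<And>y t. y \<in> {1..L-1} \<Longrightarrow> W y t \<omega> \<le> 1 / (4 * (real L)\<^sup>2) * t\<^sup>2 + Bf y"
      by metis
    define B where "B = (\<Sum>y\<in>{1..L-1}. \<bar>Bf y\<bar>)"
    have grow: "W y t \<omega> \<le> t\<^sup>2 / (4 * (real L)\<^sup>2) + B" if y: "y \<in> {1..L-1}" for y t
    proof -
      have "Bf y \<le> \<bar>Bf y\<bar>" by simp
      also have "\<bar>Bf y\<bar> \<le> B" unfolding B_def by (rule member_le_sum[OF y]) auto
      finally show ?thesis using Bf[OF y, of t] by simp
    qed
    obtain h where h: "h \<in> configs L" "\<forall>g\<in>configs L. energy L W \<omega> h \<le> energy L W \<omega> g"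
      using exists_min[of L W \<omega> B, OF L cont zero grow] by blast
    have H: "Greal L x (of_rat a) (of_rat b) (of_rat c) (of_rat d) (Ytot L x W (of_rat a) (of_rat b) (of_rat c) (of_rat d) \<omega>)
         \<noteq> - (W x (of_rat c) \<omega> - W x (of_rat b) \<omega>)"
      if "x \<in> {1..L-1}" "a < b" "b < c" "c < d" for x a b c d
      using N[rule_format, of "(x, a, b, c, d)"] that by simp
    show ?case
    proof (rule ex1I[of _ h])
      show "h \<in> configs L \<and> (\<forall>g\<in>configs L. energy L W \<omega> h \<le> energy L W \<omega> g)" using h by blast
    next
      fix g assume g: "g \<in> configs L \<and> (\<forall>g'\<in>configs L. energy L W \<omega> g \<le> energy L W \<omega> g')"
      show "g = h"
        by (rule unique_min[of L W \<omega>, OF L cont H]) (use g h in auto)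
    qed
  qed
qed


end
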